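(* On a dynamic surface $\Sigma_t$, the temporal curvature tensor $\dot R^\beta_{\ \alpha\gamma}=\partial_t\Gamma^\beta_{\alpha\gamma}+R^\beta_{\ \gamma\alpha\delta}V^\delta-\nabla_\alpha\dot\Gamma^\beta_\gamma$ satisfies $$\dot R^\beta_{\ \alpha\gamma}=\nabla^\beta\!\left(CB_{\alpha\gamma}\right)-\nabla_\gamma\!\left(CB^\beta_\alpha\right)=B_{\alpha\gamma}\nabla^\beta C-B^\beta_\alpha\nabla_\gamma C .$$ Consequently, for every smooth contravariant surface field $\psi^\beta$, $(\dot\nabla\nabla_\alpha-\nabla_\alpha\dot\nabla-CB^\gamma_\alpha\nabla_\gamma)\psi^\beta=(B_{\alpha\gamma}\nabla^\beta C-B^\beta_\alpha\nabla_\gamma C)\psi^\gamma$.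
   Context: Setting: $\Sigma_t$ is a smooth one-parameter family of 2-dimensional surfaces in Euclidean 3-space given by $\mathbf R(S^1,S^2,t)$ in surface coordinates $S^\alpha$; $\mathbf S_\alpha=\partial_\alpha\mathbf R$, metric $S_{\alpha\beta}=\mathbf S_\alpha\cdot\mathbf S_\beta$ with inverse $S^{\alpha\beta}$ (used to raise/lower indices), $\mathbf S^\alpha=S^{\alpha\beta}\mathbf S_\beta$, unit normal $\mathbf N$, Christoffel symbols $\Gamma^\gamma_{\alpha\beta}=\mathbf S^\gamma\cdot\partial_\alpha\mathbf S_\beta$, surface covariant derivative $\nabla_\alpha$, curvature tensor $B_{\alpha\beta}=\mathbf N\cdot\nabla_\alpha\mathbf S_\beta$. The Riemann tensor is defined by $(\nabla_\alpha\nabla_\beta-\nabla_\beta\nabla_\alpha)\psi^\gamma=R^\gamma_{\ \delta\alpha\beta}\psi^\delta$. Velocity $\mathbf V=\partial_t\mathbf R$ at fixed $S^\alpha$, $C=\mathbf V\cdot\mathbf N$, $V^\alpha=\mathbf V\cdot\mathbf S^\alpha$. Christoffel time symbol $\dot\Gamma^\alpha_\beta=\nabla_\beta V^\alpha-CB^\alpha_\beta$. Invariant time derivative: $\dot\nabla\psi=\partial_t\psi-V^\alpha\nabla_\alpha\psi$ on scalars, $\dot\nabla\psi^\alpha=\partial_t\psi^\alpha-V^\gamma\nabla_\gamma\psi^\alpha+\dot\Gamma^\alpha_\gamma\psi^\gamma$, $\dot\nabla\psi_\alpha=\partial_t\psi_\alpha-V^\gamma\nabla_\gamma\psi_\alpha-\dot\Gamma^\gamma_\alpha\psi_\gamma$,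 one term per index for higher rank. *)

theory Defs
  imports "HOL-Analysis.Analysis" "HOL-Analysis.Cross3"
begin

(* Points of parameter space: (S^1, S^2, t).  Coordinate index 0 = S^1, 1 = S^2, 2 = t.
   Surface indices alpha, beta, ... range over {0,1}; all index sums are over {..<2}. *)
type_synonym pt = "real \<times> real \<times> real"

definition coord :: "nat \<Rightarrow> pt \<Rightarrow> real" where
  "coord i p = (if i = 0 then fst p else if i = 1 then fst (snd p) else snd (snd p))"

definition setc :: "nat \<Rightarrow> real \<Rightarrow> pt \<Rightarrow> pt" where
  "setc i s p = (if i = 0 then (s, snd p) else if i = 1 then (fst p, s, snd (snd p))
                 else (fst p, fst (snd p), s))"

definition pd :: "nat \<Rightarrow> (pt \<Rightarrow> 'a::real_normed_vector) \<Rightarrow> pt \<Rightarrow> 'a" where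
  "pd i f p = vector_derivative (\<lambda>s. f (setc i s p)) (at (coord i p))"

fun Ck :: "nat \<Rightarrow> pt set \<Rightarrow> (pt \<Rightarrow> 'a::real_normed_vector) \<Rightarrow> bool" where
  "Ck 0 U f = continuous_on U f"
| "Ck (Suc k) U f = (continuous_on U f \<and>
      (\<forall>i<3. \<forall>p\<in>U. (\<lambda>s. f (setc i s p)) differentiable (at (coord i p))) \<and>
      (\<forall>i<3. Ck k U (pd i f)))"

definition smooth_fn :: "pt set \<Rightarrow> (pt \<Rightarrow> 'a::real_normed_vector) \<Rightarrow> bool" where
  "smooth_fn U f = (\<forall>k. Ck k U f)"

definition Sv :: "(pt \<Rightarrow> real^3) \<Rightarrow> nat \<Rightarrow> pt \<Rightarrow> real^3" where
  "Sv R a = pd a R"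

definition metric :: "(pt \<Rightarrow> real^3) \<Rightarrow> nat \<Rightarrow> nat \<Rightarrow> pt \<Rightarrow> real" where
  "metric R a b p = Sv R a p \<bullet> Sv R b p"

definition metric_det :: "(pt \<Rightarrow> real^3) \<Rightarrow> pt \<Rightarrow> real" where
  "metric_det R p = metric R 0 0 p * metric R 1 1 p - metric R 0 1 p * metric R 1 0 p"

(* inverse of the 2x2 metric S^{ab} *)
definition metric_inv :: "(pt \<Rightarrow> real^3) \<Rightarrow> nat \<Rightarrow> nat \<Rightarrow> pt \<Rightarrow> real" where
  "metric_inv R a b p =
     (if a = b then metric R (1 - a) (1 - a) p else - metric R a b p) / metric_det R p"

definition Sup :: "(pt \<Rightarrow> real^3) \<Rightarrow> nat \<Rightarrow> pt \<Rightarrow> real^3" where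
  "Sup R a p = (\<Sum>b<2. metric_inv R a b p *\<^sub>R Sv R b p)"

definition Nrm :: "(pt \<Rightarrow> real^3) \<Rightarrow> pt \<Rightarrow> real^3" where
  "Nrm R p = (let c = cross3 (Sv R 0 p) (Sv R 1 p) in c /\<^sub>R norm c)"

definition Chr :: "(pt \<Rightarrow> real^3) \<Rightarrow> nat \<Rightarrow> nat \<Rightarrow> nat \<Rightarrow> pt \<Rightarrow> real" where
  "Chr R c a b p = Sup R c p \<bullet> pd a (Sv R b) p"

definition cov_basis :: "(pt \<Rightarrow> real^3) \<Rightarrow> nat \<Rightarrow> nat \<Rightarrow> pt \<Rightarrow> real^3" where
  "cov_basis R a b p = pd a (Sv R b) p - (\<Sum>c<2. Chr R c a b p *\<^sub>R Sv R c p)"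

definition Bcurv :: "(pt \<Rightarrow> real^3) \<Rightarrow> nat \<Rightarrow> nat \<Rightarrow> pt \<Rightarrow> real" where
  "Bcurv R a b p = Nrm R p \<bullet> cov_basis R a b p"

definition Bmixed :: "(pt \<Rightarrow> real^3) \<Rightarrow> nat \<Rightarrow> nat \<Rightarrow> pt \<Rightarrow> real" where
  "Bmixed R b a p = (\<Sum>c<2. metric_inv R b c p * Bcurv R c a p)"

definition Vel :: "(pt \<Rightarrow> real^3) \<Rightarrow> pt \<Rightarrow> real^3" where
  "Vel R p = pd 2 R p"

definition Cn :: "(pt \<Rightarrow> real^3) \<Rightarrow> pt \<Rightarrow> real" where
  "Cn R p = Vel R p \<bullet> Nrm R p"

definition Vup :: "(pt \<Rightarrow> real^3) \<Rightarrow> nat \<Rightarrow> pt \<Rightarrow> real" where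
  "Vup R a p = Vel R p \<bullet> Sup R a p"

(* Covariant derivatives of surface tensor fields (components as functions on pt).
   Contravariant field psi: psi b = psi^b.  Rank-2 fields T: T i j. *)
definition cov_up :: "(pt \<Rightarrow> real^3) \<Rightarrow> nat \<Rightarrow> (nat \<Rightarrow> pt \<Rightarrow> real) \<Rightarrow> nat \<Rightarrow> pt \<Rightarrow> real" where
  "cov_up R a psi b p = pd a (psi b) p + (\<Sum>c<2. Chr R b a c p * psi c p)"

definition cov_ll :: "(pt \<Rightarrow> real^3) \<Rightarrow> nat \<Rightarrow> (nat \<Rightarrow> nat \<Rightarrow> pt \<Rightarrow> real) \<Rightarrow> nat \<Rightarrow> nat \<Rightarrow> pt \<Rightarrow> real" where
  "cov_ll R a T b c p = pd a (T b c) p - (\<Sum>d<2. Chr R d a b p * T d c p)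
                                       - (\<Sum>d<2. Chr R d a c p * T b d p)"

(* nabla_a T^b_c, where T b c = T^b_c *)
definition cov_ul :: "(pt \<Rightarrow> real^3) \<Rightarrow> nat \<Rightarrow> (nat \<Rightarrow> nat \<Rightarrow> pt \<Rightarrow> real) \<Rightarrow> nat \<Rightarrow> nat \<Rightarrow> pt \<Rightarrow> real" where
  "cov_ul R a T b c p = pd a (T b c) p + (\<Sum>d<2. Chr R b a d p * T d c p)
                                       - (\<Sum>d<2. Chr R d a c p * T b d p)"

definition grad_up :: "(pt \<Rightarrow> real^3) \<Rightarrow> nat \<Rightarrow> (pt \<Rightarrow> real) \<Rightarrow> pt \<Rightarrow> real" where
  "grad_up R b f p = (\<Sum>c<2. metric_inv R b c p * pd c f p)"

definition Chr_dot :: "(pt \<Rightarrow> real^3) \<Rightarrow> nat \<Rightarrow> nat \<Rightarrow> pt \<Rightarrow> real" where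
  "Chr_dot R a b p = cov_up R b (Vup R) a p - Cn R p * Bmixed R a b p"

definition tder_up :: "(pt \<Rightarrow> real^3) \<Rightarrow> (nat \<Rightarrow> pt \<Rightarrow> real) \<Rightarrow> nat \<Rightarrow> pt \<Rightarrow> real" where
  "tder_up R psi b p = pd 2 (psi b) p - (\<Sum>c<2. Vup R c p * cov_up R c psi b p)
                       + (\<Sum>c<2. Chr_dot R b c p * psi c p)"

definition tder_ul :: "(pt \<Rightarrow> real^3) \<Rightarrow> (nat \<Rightarrow> nat \<Rightarrow> pt \<Rightarrow> real) \<Rightarrow> nat \<Rightarrow> nat \<Rightarrow> pt \<Rightarrow> real" where
  "tder_ul R T b a p = pd 2 (T b a) p - (\<Sum>c<2. Vup R c p * cov_ul R c T b a p)
                       + (\<Sum>c<2. Chr_dot R b c p * T c a p)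
                       - (\<Sum>c<2. Chr_dot R c a p * T b c p)"

(* Riemann tensor R^g_{dab}, the component expression of the defining identity
   (nabla_a nabla_b - nabla_b nabla_a) psi^g = R^g_{dab} psi^d *)
definition Riem :: "(pt \<Rightarrow> real^3) \<Rightarrow> nat \<Rightarrow> nat \<Rightarrow> nat \<Rightarrow> nat \<Rightarrow> pt \<Rightarrow> real" where
  "Riem R g d a b p = pd a (Chr R g b d) p - pd b (Chr R g a d) p
      + (\<Sum>e<2. Chr R g a e p * Chr R e b d p) - (\<Sum>e<2. Chr R g b e p * Chr R e a d p)"

definition Rdot :: "(pt \<Rightarrow> real^3) \<Rightarrow> nat \<Rightarrow> nat \<Rightarrow> nat \<Rightarrow> pt \<Rightarrow> real" where
  "Rdot R b a g p = pd 2 (Chr R b a g) p + (\<Sum>d<2. Riem R b g a d p * Vup R d p)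
                    - cov_ul R a (Chr_dot R) b g p"

end

theory Submission
  imports Defs
begin


lemma three_cases: "(i::nat) < 3 \<Longrightarrow> i = 0 \<or> i = 1 \<or> i = 2" by auto

lemma coord_setc: "i < 3 \<Longrightarrow> j < 3 \<Longrightarrow> coord i (setc j s p) = (if i = j then s else coord i p)"
  by (drule three_cases, drule three_cases) (auto simp: coord_def setc_def)

lemma coord_setc_same[simp]: "coord i (setc i s p) = s"
  by (auto simp: coord_def setc_def)

lemma setc_setc_same[simp]: "setc i s (setc i t p) = setc i s p"
  by (auto simp: setc_def)

lemma setc_coord[simp]: "setc i (coord i p) p = p"
  by (auto simp: coord_def setc_def)

lemma setc_comm: "i < 3 \<Longrightarrow> j < 3 \<Longrightarrow> i \<noteq> j \<Longrightarrow> setc i s (setc j t p) = setc j t (setc i s p)"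
  by (drule three_cases, drule three_cases) (auto simp: setc_def)



lemma dist_setc: "i < 3 \<Longrightarrow> dist (setc i s p) p = \<bar>s - coord i p\<bar>"
proof -
  assume "i < 3"
  then consider "i = 0" | "i = 1" | "i = 2" by linarith
  then show ?thesis
  proof cases
    case 1 then show ?thesis by (cases p) (simp add: setc_def coord_def dist_Pair_Pair dist_real_def)
  next
    case 2 then show ?thesis by (cases p) (simp add: setc_def coord_def dist_Pair_Pair dist_real_def)
  next
    case 3 then show ?thesis by (cases p) (simp add: setc_def coord_def dist_Pair_Pair dist_real_def)
  qed
qed
lemma line_ball:
  assumes "open U" "p \<in> U" "i < 3"
  obtains r where "r > 0" "\<And>s. \<bar>s - coord i p\<bar> < r \<Longrightarrow> setc i s p \<in> U"
proof -
  obtain r where r: "r > 0" "ball p r \<subseteq> U" using assms open_contains_ball by blast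
  have "setc i s p \<in> U" if "\<bar>s - coord i p\<bar> < r" for s
  proof -
    have "dist p (setc i s p) < r" using that dist_setc[OF assms(3), of s p] by (simp add: dist_commute)
    then show ?thesis using r(2) by (meson mem_ball subsetD)
  qed
  then show ?thesis using that r(1) by blast
qed

lemma line_eventually:
  assumes "open U" "p \<in> U" "i < 3"
  shows "eventually (\<lambda>s. setc i s p \<in> U) (nhds (coord i p))"
proof -
  obtain r where r: "r > 0" "\<And>s. \<bar>s - coord i p\<bar> < r \<Longrightarrow> setc i s p \<in> U"
    using line_ball[OF assms] by blast
  show ?thesis unfolding eventually_nhds_metric
    using r by (metis dist_real_def)
qed



lemma hvd_cong_U:
  assumes "open U" "p \<in> U" "i < 3" "\<forall>q\<in>U. f q = g q"
  shows "((\<lambda>s. f (setc i s p)) has_vector_derivative D) (at (coord i p))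
     = ((\<lambda>s. g (setc i s p)) has_vector_derivative D) (at (coord i p))"
proof -
  have ev: "eventually (\<lambda>s. s \<in> UNIV \<longrightarrow> f (setc i s p) = g (setc i s p)) (nhds (coord i p))"
    using line_eventually[OF assms(1-3)] assms(4) by (simp add: eventually_mono)
  have "f (setc i (coord i p) p) = g (setc i (coord i p) p)" using assms by simp
  from has_vector_derivative_cong_ev[OF ev this] show ?thesis by simp
qed

lemma pd_cong:
  assumes "open U" "p \<in> U" "i < 3" "\<forall>q\<in>U. f q = g q"
  shows "pd i f p = pd i g p"
proof -
  have e: "(\<lambda>D. ((\<lambda>s. f (setc i s p)) has_vector_derivative D) (at (coord i p)))
        = (\<lambda>D. ((\<lambda>s. g (setc i s p)) has_vector_derivative D) (at (coord i p)))"
    by (rule ext, rule hvd_cong_U[OF assms])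
  show ?thesis unfolding pd_def vector_derivative_def by (rule arg_cong[where f=Eps, OF e])
qed

lemma diff_cong:
  assumes "open U" "p \<in> U" "i < 3" "\<forall>q\<in>U. f q = g q"
  shows "((\<lambda>s. f (setc i s p)) differentiable (at (coord i p)))
     = ((\<lambda>s. g (setc i s p)) differentiable (at (coord i p)))"
proof
  assume "(\<lambda>s. f (setc i s p)) differentiable (at (coord i p))"
  then have "((\<lambda>s. f (setc i s p)) has_vector_derivative
     vector_derivative (\<lambda>s. f (setc i s p)) (at (coord i p))) (at (coord i p))"
    by (simp only: vector_derivative_works[symmetric])
  then have "((\<lambda>s. g (setc i s p)) has_vector_derivative
     vector_derivative (\<lambda>s. f (setc i s p)) (at (coord i p))) (at (coord i p))"
    using hvd_cong_U[OF assms] by blast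
  then show "(\<lambda>s. g (setc i s p)) differentiable (at (coord i p))" by (rule differentiableI_vector)
next
  assume "(\<lambda>s. g (setc i s p)) differentiable (at (coord i p))"
  then have "((\<lambda>s. g (setc i s p)) has_vector_derivative
     vector_derivative (\<lambda>s. g (setc i s p)) (at (coord i p))) (at (coord i p))"
    by (simp only: vector_derivative_works[symmetric])
  then have "((\<lambda>s. f (setc i s p)) has_vector_derivative
     vector_derivative (\<lambda>s. g (setc i s p)) (at (coord i p))) (at (coord i p))"
    using hvd_cong_U[OF assms] by blast
  then show "(\<lambda>s. f (setc i s p)) differentiable (at (coord i p))" by (rule differentiableI_vector)
qed



lemma Ck_cong:
  assumes "open U"
  shows "Ck k U f \<Longrightarrow> \<forall>q\<in>U. f q = g q \<Longrightarrow> Ck k U g"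
proof (induction k arbitrary: f g)
  case 0
  then show ?case using continuous_on_cong[of U U f g] by simp
next
  case (Suc k)
  have c: "continuous_on U g" using Suc.prems(1) Suc.prems(2) continuous_on_cong[of U U f g]
    by simp
  have d: "\<forall>i<3. \<forall>p\<in>U. (\<lambda>s. g (setc i s p)) differentiable (at (coord i p))"
  proof (intro allI impI ballI)
    fix i p assume "i < (3::nat)" "p \<in> U"
    then show "(\<lambda>s. g (setc i s p)) differentiable (at (coord i p))"
      using Suc.prems diff_cong[OF assms \<open>p \<in> U\<close> \<open>i < 3\<close> Suc.prems(2)] by simp
  qed
  have e: "\<forall>i<3. Ck k U (pd i g)"
  proof (intro allI impI)
    fix i :: nat assume i: "i < 3"
    have "Ck k U (pd i f)" using Suc.prems(1) i by simp
    moreover have "\<forall>q\<in>U. pd i f q = pd i g q" using pd_cong[OF assms _ i Suc.prems(2)] by blast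
    ultimately show "Ck k U (pd i g)" using Suc.IH by blast
  qed
  show ?case using c d e by simp
qed

lemma Ck_Suc_mono: "Ck (Suc k) U f \<Longrightarrow> Ck k U f"
proof (induction k arbitrary: f)
  case 0 then show ?case by simp
next
  case (Suc k) then show ?case by (metis Ck.simps(2))
qed

lemma Ck_mono: "k \<le> m \<Longrightarrow> Ck m U f \<Longrightarrow> Ck k U f"
  by (induction m rule: dec_induct) (blast dest: Ck_Suc_mono)+

lemma Ck_cont: "Ck k U f \<Longrightarrow> continuous_on U f"
  by (cases k) auto



lemma Ck_line:
  assumes "Ck (Suc k) U f" "p \<in> U" "i < 3"
  shows "((\<lambda>s. f (setc i s p)) has_vector_derivative pd i f p) (at (coord i p))"
proof -
  have "(\<lambda>s. f (setc i s p)) differentiable at (coord i p)" using assms by simp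
  then show ?thesis unfolding pd_def using vector_derivative_works by blast
qed

lemma pd_eqI:
  assumes "((\<lambda>s. f (setc i s p)) has_vector_derivative D) (at (coord i p))"
  shows "pd i f p = D"
  unfolding pd_def using assms by (rule vector_derivative_at)

lemma Ck_const: "Ck k U (\<lambda>q. c)"
proof (induction k arbitrary: c)
  case 0 then show ?case by simp
next
  case (Suc k)
  have "pd i (\<lambda>q. c) = (\<lambda>q. 0)" for i
    by (rule ext, rule pd_eqI) simp
  then show ?case using Suc by simp
qed

lemma Ck_add:
  assumes "open U"
  shows "Ck k U f \<Longrightarrow> Ck k U g \<Longrightarrow> Ck k U (\<lambda>q. f q + g q)"
proof (induction k arbitrary: f g)
  case 0 then show ?case by (simp add: continuous_on_add)
next
  case (Suc k)
  have e: "Ck k U (pd i (\<lambda>q. f q + g q))" if i: "i < 3" for i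
  proof -
    have "\<forall>p\<in>U. pd i f p + pd i g p = pd i (\<lambda>q. f q + g q) p"
    proof
      fix p assume p: "p \<in> U"
      show "pd i f p + pd i g p = pd i (\<lambda>q. f q + g q) p"
        by (rule sym, rule pd_eqI, rule has_vector_derivative_add[OF Ck_line[OF Suc.prems(1) p i] Ck_line[OF Suc.prems(2) p i]])
    qed
    moreover have "Ck k U (\<lambda>p. pd i f p + pd i g p)"
      using Suc.prems i by (intro Suc.IH) auto
    ultimately show ?thesis using Ck_cong[OF assms] by blast
  qed
  have c: "continuous_on U (\<lambda>q. f q + g q)"
    using Suc.prems by (simp add: continuous_on_add)
  have d: "\<forall>i<3. \<forall>p\<in>U. (\<lambda>s. f (setc i s p) + g (setc i s p)) differentiable at (coord i p)"
    using Suc.prems by simp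
  show ?case using c d e by simp
qed

lemma (in bounded_linear) Ck_lin:
  assumes "open U"
  shows "Ck k U g \<Longrightarrow> Ck k U (\<lambda>q. f (g q))"
proof (induction k arbitrary: g)
  case 0 then show ?case by (simp add: continuous_on)
next
  case (Suc k)
  have e: "Ck k U (pd i (\<lambda>q. f (g q)))" if i: "i < 3" for i
  proof -
    have "\<forall>p\<in>U. f (pd i g p) = pd i (\<lambda>q. f (g q)) p"
    proof
      fix p assume p: "p \<in> U"
      show "f (pd i g p) = pd i (\<lambda>q. f (g q)) p"
        by (rule sym, rule pd_eqI, rule has_vector_derivative[OF Ck_line[OF Suc.prems(1) p i]])
    qed
    moreover have "Ck k U (\<lambda>p. f (pd i g p))" using Suc.prems i by (intro Suc.IH) auto
    ultimately show ?thesis using Ck_cong[OF assms] by blast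
  qed
  have c: "continuous_on U (\<lambda>q. f (g q))"
    using Suc.prems by (simp add: continuous_on)
  have d: "\<forall>i<3. \<forall>p\<in>U. (\<lambda>s. f (g (setc i s p))) differentiable at (coord i p)"
  proof (intro allI impI ballI)
    fix i p assume i: "i < (3::nat)" and p: "p \<in> U"
    show "(\<lambda>s. f (g (setc i s p))) differentiable at (coord i p)"
      by (rule differentiableI_vector, rule has_vector_derivative[OF Ck_line[OF Suc.prems(1) p i]])
  qed
  show ?case using c d e by simp
qed

lemma (in bounded_bilinear) Ck_bil:
  assumes "open U"
  shows "Ck k U f \<Longrightarrow> Ck k U g \<Longrightarrow> Ck k U (\<lambda>q. prod (f q) (g q))"
proof (induction k arbitrary: f g)
  case 0 then show ?case by (simp add: continuous_on)
next
  case (Suc k)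
  have hv: "((\<lambda>s. prod (f (setc i s p)) (g (setc i s p))) has_vector_derivative
          prod (f p) (pd i g p) + prod (pd i f p) (g p)) (at (coord i p))"
    if i: "i < 3" and p: "p \<in> U" for i p
    using has_vector_derivative[OF Ck_line[OF Suc.prems(1) p i] Ck_line[OF Suc.prems(2) p i]]
    by simp
  have e: "Ck k U (pd i (\<lambda>q. prod (f q) (g q)))" if i: "i < 3" for i
  proof -
    have "\<forall>p\<in>U. prod (f p) (pd i g p) + prod (pd i f p) (g p) = pd i (\<lambda>q. prod (f q) (g q)) p"
    proof
      fix p assume p: "p \<in> U"
      show "prod (f p) (pd i g p) + prod (pd i f p) (g p) = pd i (\<lambda>q. prod (f q) (g q)) p"
        by (rule sym, rule pd_eqI, rule hv[OF i p])
    qed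
    moreover have "Ck k U (\<lambda>p. prod (f p) (pd i g p) + prod (pd i f p) (g p))"
    proof (rule Ck_add[OF assms])
      show "Ck k U (\<lambda>p. prod (f p) (pd i g p))" using Suc.prems i Ck_Suc_mono by (intro Suc.IH) auto
      show "Ck k U (\<lambda>p. prod (pd i f p) (g p))" using Suc.prems i Ck_Suc_mono by (intro Suc.IH) auto
    qed
    ultimately show ?thesis using Ck_cong[OF assms] by blast
  qed
  have c: "continuous_on U (\<lambda>q. prod (f q) (g q))"
    using Suc.prems by (simp add: continuous_on)
  have d: "\<forall>i<3. \<forall>p\<in>U. (\<lambda>s. prod (f (setc i s p)) (g (setc i s p))) differentiable at (coord i p)"
    using hv differentiableI_vector by blast
  show ?case using c d e by simp
qed



lemma bounded_bilinear_cross3: "bounded_bilinear (cross3 :: real^3 \<Rightarrow> real^3 \<Rightarrow> real^3)"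
proof (rule bounded_bilinear.intro)
  show "\<And>a a' b. cross3 (a + a') b = cross3 a b + cross3 a' b" by (rule cross_add_left)
  show "\<And>a b b'. cross3 a (b + b') = cross3 a b + cross3 a b'" by (rule cross_add_right)
  show "\<And>r a b. cross3 (r *\<^sub>R a) b = r *\<^sub>R cross3 a b" by (rule cross_mult_left)
  show "\<And>a r b. cross3 a (r *\<^sub>R b) = r *\<^sub>R cross3 a b" by (rule cross_mult_right)
  show "\<exists>K. \<forall>a b. norm (cross3 a b) \<le> norm a * norm b * K"
  proof (intro exI allI)
    fix a b :: "real^3"
    have "(norm (cross3 a b))\<^sup>2 \<le> (norm a * norm b)\<^sup>2"
      using norm_cross_dot[of a b] by (metis le_add_same_cancel1 zero_le_power2)
    then have "norm (cross3 a b) \<le> norm a * norm b"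
      by (simp add: power2_le_iff_abs_le)
    then show "norm (cross3 a b) \<le> norm a * norm b * 1" by simp
  qed
qed

lemma smooth_Ck: "smooth_fn U f \<Longrightarrow> Ck k U f" by (simp add: smooth_fn_def)

lemmas Ck_mult = bounded_bilinear.Ck_bil[OF bounded_bilinear_mult]
lemmas Ck_scaleR = bounded_bilinear.Ck_bil[OF bounded_bilinear_scaleR]
lemmas Ck_inner = bounded_bilinear.Ck_bil[OF bounded_bilinear_inner]
lemmas Ck_cross = bounded_bilinear.Ck_bil[OF bounded_bilinear_cross3]
lemmas Ck_minus = bounded_linear.Ck_lin[OF bounded_linear_minus[OF bounded_linear_ident]]

lemma Ck_diff: "open U \<Longrightarrow> Ck k U f \<Longrightarrow> Ck k U g \<Longrightarrow> Ck k U (\<lambda>q. f q - g q)"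
proof -
  assume a: "open U" "Ck k U f" "Ck k U g"
  have "Ck k U (\<lambda>q. f q + - g q)" using a by (intro Ck_add Ck_minus)
  then show ?thesis by simp
qed

lemma Ck_sum: assumes "open U" shows "finite A \<Longrightarrow> (\<forall>x\<in>A. Ck k U (f x)) \<Longrightarrow> Ck k U (\<lambda>q. \<Sum>x\<in>A. f x q)"
proof (induction A rule: finite_induct)
  case empty then show ?case by (simp add: Ck_const)
next
  case (insert x F)
  have "Ck k U (\<lambda>q. f x q + (\<Sum>x\<in>F. f x q))"
    using insert assms by (intro Ck_add) auto
  then show ?case using insert by simp
qed

lemma Ck_inverse:
  assumes "open U" "\<forall>q\<in>U. f q \<noteq> 0"
  shows "Ck k U f \<Longrightarrow> Ck k U (\<lambda>q. inverse (f q :: real))"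
proof (induction k)
  case 0 then show ?case using assms by (simp add: continuous_on_inverse)
next
  case (Suc k)
  have hv: "((\<lambda>s. inverse (f (setc i s p))) has_vector_derivative
          - (inverse (f p) * pd i f p * inverse (f p))) (at (coord i p))"
    if i: "i < 3" and p: "p \<in> U" for i p
  proof -
    have "((\<lambda>s. f (setc i s p)) has_real_derivative pd i f p) (at (coord i p))"
      using Ck_line[OF Suc.prems p i] by (simp add: has_real_derivative_iff_has_vector_derivative)
    from DERIV_inverse'[OF this] have
      "((\<lambda>s. inverse (f (setc i s p))) has_real_derivative
          - (inverse (f p) * pd i f p * inverse (f p))) (at (coord i p))"
      using assms(2) p by simp
    then show ?thesis by (simp add: has_real_derivative_iff_has_vector_derivative)
  qed
  have e: "Ck k U (pd i (\<lambda>q. inverse (f q)))" if i: "i < 3" for i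
  proof -
    have "\<forall>p\<in>U. - (inverse (f p) * pd i f p * inverse (f p)) = pd i (\<lambda>q. inverse (f q)) p"
    proof
      fix p assume p: "p \<in> U"
      show "- (inverse (f p) * pd i f p * inverse (f p)) = pd i (\<lambda>q. inverse (f q)) p"
        by (rule sym, rule pd_eqI, rule hv[OF i p])
    qed
    moreover have "Ck k U (\<lambda>p. - (inverse (f p) * pd i f p * inverse (f p)))"
    proof -
      have ik: "Ck k U (\<lambda>q. inverse (f q))" using Suc Ck_Suc_mono by blast
      have pk: "Ck k U (pd i f)" using Suc.prems i by simp
      show ?thesis by (intro Ck_minus Ck_mult assms(1) ik pk)
    qed
    ultimately show ?thesis using Ck_cong[OF assms(1)] by blast
  qed
  have c: "continuous_on U (\<lambda>q. inverse (f q))"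
    using Suc.prems assms by (simp add: continuous_on_inverse)
  have d: "\<forall>i<3. \<forall>p\<in>U. (\<lambda>s. inverse (f (setc i s p))) differentiable at (coord i p)"
    using hv differentiableI_vector by blast
  show ?case using c d e by simp
qed

lemma Ck_sqrt:
  assumes "open U" "\<forall>q\<in>U. f q > 0"
  shows "Ck k U f \<Longrightarrow> Ck k U (\<lambda>q. sqrt (f q))"
proof (induction k)
  case 0 then show ?case using assms by (simp add: continuous_on_real_sqrt)
next
  case (Suc k)
  have hv: "((\<lambda>s. sqrt (f (setc i s p))) has_vector_derivative
          (inverse (sqrt (f p)) / 2 * pd i f p)) (at (coord i p))"
    if i: "i < 3" and p: "p \<in> U" for i p
  proof -
    have "((\<lambda>s. f (setc i s p)) has_real_derivative pd i f p) (at (coord i p))"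
      using Ck_line[OF Suc.prems p i] by (simp add: has_real_derivative_iff_has_vector_derivative)
    from DERIV_chain2[OF DERIV_real_sqrt this] have
      "((\<lambda>s. sqrt (f (setc i s p))) has_real_derivative
          (inverse (sqrt (f p)) / 2 * pd i f p)) (at (coord i p))"
      using assms(2) p by simp
    then show ?thesis by (simp add: has_real_derivative_iff_has_vector_derivative)
  qed
  have e: "Ck k U (pd i (\<lambda>q. sqrt (f q)))" if i: "i < 3" for i
  proof -
    have "\<forall>p\<in>U. (inverse (sqrt (f p)) * (1/2)) * pd i f p = pd i (\<lambda>q. sqrt (f q)) p"
    proof
      fix p assume p: "p \<in> U"
      show "(inverse (sqrt (f p)) * (1/2)) * pd i f p = pd i (\<lambda>q. sqrt (f q)) p"
        using pd_eqI[OF hv[OF i p]] by simp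
    qed
    moreover have "Ck k U (\<lambda>p. (inverse (sqrt (f p)) * (1/2)) * pd i f p)"
    proof -
      have sk: "Ck k U (\<lambda>q. sqrt (f q))" using Suc Ck_Suc_mono by blast
      have ik: "Ck k U (\<lambda>q. inverse (sqrt (f q)))"
        using assms by (intro Ck_inverse sk) auto
      have pk: "Ck k U (pd i f)" using Suc.prems i by simp
      show ?thesis by (intro Ck_mult assms(1) ik pk Ck_const)
    qed
    ultimately show ?thesis using Ck_cong[OF assms(1)] by blast
  qed
  have c: "continuous_on U (\<lambda>q. sqrt (f q))"
    using Suc.prems assms by (simp add: continuous_on_real_sqrt)
  have d: "\<forall>i<3. \<forall>p\<in>U. (\<lambda>s. sqrt (f (setc i s p))) differentiable at (coord i p)"
    using hv differentiableI_vector by blast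
  show ?case using c d e by simp
qed



lemma seg_ball: "\<bar>h\<bar> < d \<Longrightarrow> closed_segment (a::real) (a + h) \<subseteq> ball a d"
  by (rule closed_segment_subset) (auto simp: dist_real_def)

lemma clairaut_est:
  fixes f :: "pt \<Rightarrow> 'a::real_normed_vector"
  assumes U: "open U" and f: "Ck 2 U f" and p: "p \<in> U" and ij: "i < 3" "j < 3" "i \<noteq> j"
    and e: "\<epsilon> > 0"
  shows "\<exists>\<delta>>0. \<forall>h. \<bar>h\<bar> < \<delta> \<longrightarrow>
     norm (f (setc i (coord i p + h) (setc j (coord j p + h) p))
         - f (setc i (coord i p + h) (setc j (coord j p) p))
         - (f (setc i (coord i p) (setc j (coord j p + h) p)) - f (setc i (coord i p) (setc j (coord j p) p)))
         - (h * h) *\<^sub>R pd j (pd i f) p) \<le> 9 * \<epsilon> * (h * h)"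
proof -
  define F where "F = pd j (pd i f)"
  define x0 where "x0 = coord i p"
  define y0 where "y0 = coord j p"
  define \<Phi> where "\<Phi> s u = setc i s (setc j u p)" for s u
  have f1: "Ck (Suc 1) U f" using f by (simp add: numeral_2_eq_2)
  have fi: "Ck (Suc 0) U (pd i f)" using f ij by (simp add: numeral_2_eq_2)
  have Fc: "continuous_on U F" using f ij by (simp add: F_def numeral_2_eq_2)
  obtain r where r: "r > 0" "ball p r \<subseteq> U" using U p open_contains_ball by blast
  obtain d where d: "d > 0" "\<And>q. q \<in> U \<Longrightarrow> dist q p < d \<Longrightarrow> dist (F q) (F p) < \<epsilon>"
    using Fc p e unfolding continuous_on_iff by blast
  define \<delta> where "\<delta> = min r d / 2"
  have \<delta>: "\<delta> > 0" using r d by (simp add: \<delta>_def)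
  have dist\<Phi>: "dist (\<Phi> s u) p \<le> \<bar>s - x0\<bar> + \<bar>u - y0\<bar>" for s u
  proof -
    have "dist (\<Phi> s u) p \<le> dist (\<Phi> s u) (setc j u p) + dist (setc j u p) p" by (rule dist_triangle)
    also have "dist (\<Phi> s u) (setc j u p) = \<bar>s - x0\<bar>"
      using dist_setc[OF ij(1), of s "setc j u p"] coord_setc[OF ij(1,2)] ij(3)
      by (simp add: \<Phi>_def x0_def)
    also have "dist (setc j u p) p = \<bar>u - y0\<bar>" using dist_setc[OF ij(2)] by (simp add: y0_def)
    finally show ?thesis .
  qed
  have inU: "\<Phi> s u \<in> U" and near: "norm (F (\<Phi> s u) - F p) < \<epsilon>"
    if "\<bar>s - x0\<bar> < \<delta>" "\<bar>u - y0\<bar> < \<delta>" for s u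
  proof -
    have dd: "dist (\<Phi> s u) p < min r d" using dist\<Phi>[of s u] that by (simp add: \<delta>_def)
    then have "\<Phi> s u \<in> ball p r" by (simp add: dist_commute)
    then show "\<Phi> s u \<in> U" using r(2) by blast
    then show "norm (F (\<Phi> s u) - F p) < \<epsilon>" using d(2) dd by (simp add: dist_norm)
  qed
  have coordi: "coord i (\<Phi> s u) = s" for s u by (simp add: \<Phi>_def)
  have coordj: "coord j (\<Phi> s u) = u" for s u
    using coord_setc[OF ij(2,1)] ij(3) by (simp add: \<Phi>_def)
  have linei: "setc i s' (\<Phi> s u) = \<Phi> s' u" for s s' u by (simp add: \<Phi>_def)
  have linej: "setc j u' (\<Phi> s u) = \<Phi> s u'" for s u u'
    using setc_comm[OF ij(2,1)] ij(3) by (simp add: \<Phi>_def)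
  have \<Phi>0: "\<Phi> x0 y0 = p" by (simp add: \<Phi>_def x0_def y0_def)
  have dvi: "((\<lambda>s. f (\<Phi> s u)) has_vector_derivative pd i f (\<Phi> s u)) (at s)"
    if "\<bar>s - x0\<bar> < \<delta>" "\<bar>u - y0\<bar> < \<delta>" for s u
    using Ck_line[OF f1 inU[OF that] ij(1)] by (simp add: linei coordi)
  have dvj: "((\<lambda>u. pd i f (\<Phi> s u)) has_vector_derivative F (\<Phi> s u)) (at u)"
    if "\<bar>s - x0\<bar> < \<delta>" "\<bar>u - y0\<bar> < \<delta>" for s u
    using Ck_line[OF fi inU[OF that] ij(2)] by (simp add: linej coordj F_def)
  show ?thesis
  proof (intro exI[of _ \<delta>] conjI allI impI \<delta>)
    fix h :: real assume h: "\<bar>h\<bar> < \<delta>"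
    have inner: "norm (pd i f (\<Phi> s (y0 + h)) - pd i f (\<Phi> s y0) - h *\<^sub>R F p) \<le> 3 * \<epsilon> * \<bar>h\<bar>"
      if s: "\<bar>s - x0\<bar> < \<delta>" for s
    proof -
      have "norm (pd i f (\<Phi> s (y0 + h)) - pd i f (\<Phi> s y0) - ((y0 + h) - y0) *\<^sub>R F (\<Phi> s y0))
            \<le> norm ((y0 + h) - y0) * (2 * \<epsilon>)"
      proof (rule vector_differentiable_bound_linearization[where S="ball y0 \<delta>"])
        fix u assume "u \<in> ball y0 \<delta>"
        then have u: "\<bar>u - y0\<bar> < \<delta>" by (simp add: dist_real_def abs_minus_commute)
        show "((\<lambda>u. pd i f (\<Phi> s u)) has_vector_derivative F (\<Phi> s u)) (at u within ball y0 \<delta>)"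
          using dvj[OF s u] by (rule has_vector_derivative_at_within)
        have "norm (F (\<Phi> s u) - F (\<Phi> s y0)) \<le> norm (F (\<Phi> s u) - F p) + norm (F (\<Phi> s y0) - F p)"
          using norm_triangle_ineq4[of "F (\<Phi> s u) - F p" "F (\<Phi> s y0) - F p"] by simp
        also have "\<dots> \<le> 2 * \<epsilon>" using near[OF s u] near[OF s, of y0] \<delta> by simp
        finally show "norm (F (\<Phi> s u) - F (\<Phi> s y0)) \<le> 2 * \<epsilon>" .
      next
        show "closed_segment y0 (y0 + h) \<subseteq> ball y0 \<delta>" using seg_ball h .
        show "y0 \<in> ball y0 \<delta>" using \<delta> by simp
      qed
      then have A: "norm (pd i f (\<Phi> s (y0 + h)) - pd i f (\<Phi> s y0) - h *\<^sub>R F (\<Phi> s y0)) \<le> \<bar>h\<bar> * (2 * \<epsilon>)"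
        by simp
      have B: "norm (h *\<^sub>R F (\<Phi> s y0) - h *\<^sub>R F p) \<le> \<bar>h\<bar> * \<epsilon>"
      proof -
        have "norm (h *\<^sub>R F (\<Phi> s y0) - h *\<^sub>R F p) = \<bar>h\<bar> * norm (F (\<Phi> s y0) - F p)"
          by (simp add: scaleR_diff_right[symmetric])
        also have "\<dots> \<le> \<bar>h\<bar> * \<epsilon>" using near[OF s, of y0] \<delta> by (intro mult_left_mono) auto
        finally show ?thesis .
      qed
      have "norm (pd i f (\<Phi> s (y0 + h)) - pd i f (\<Phi> s y0) - h *\<^sub>R F p)
          \<le> norm (pd i f (\<Phi> s (y0 + h)) - pd i f (\<Phi> s y0) - h *\<^sub>R F (\<Phi> s y0))
            + norm (h *\<^sub>R F (\<Phi> s y0) - h *\<^sub>R F p)"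
        by (rule order_trans[OF _ norm_triangle_ineq]) (simp add: algebra_simps)
      then show ?thesis using A B by (simp add: algebra_simps)
    qed
    define \<psi> where "\<psi> s = f (\<Phi> s (y0 + h)) - f (\<Phi> s y0)" for s
    define \<psi>' where "\<psi>' s = pd i f (\<Phi> s (y0 + h)) - pd i f (\<Phi> s y0)" for s
    have "norm (\<psi> (x0 + h) - \<psi> x0 - ((x0 + h) - x0) *\<^sub>R \<psi>' x0) \<le> norm ((x0 + h) - x0) * (6 * \<epsilon> * \<bar>h\<bar>)"
    proof (rule vector_differentiable_bound_linearization[where S="ball x0 \<delta>"])
      fix s assume "s \<in> ball x0 \<delta>"
      then have s: "\<bar>s - x0\<bar> < \<delta>" by (simp add: dist_real_def abs_minus_commute)
      have hy: "\<bar>(y0 + h) - y0\<bar> < \<delta>" "\<bar>y0 - y0\<bar> < \<delta>" using h \<delta> by auto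
      show "(\<psi> has_vector_derivative \<psi>' s) (at s within ball x0 \<delta>)"
        unfolding \<psi>_def \<psi>'_def
        by (rule has_vector_derivative_at_within, rule has_vector_derivative_diff[OF dvi[OF s hy(1)] dvi[OF s hy(2)]])
      have x0: "\<bar>x0 - x0\<bar> < \<delta>" using \<delta> by simp
      have "norm (\<psi>' s - \<psi>' x0) \<le> norm (\<psi>' s - h *\<^sub>R F p) + norm (\<psi>' x0 - h *\<^sub>R F p)"
        using norm_triangle_ineq4[of "\<psi>' s - h *\<^sub>R F p" "\<psi>' x0 - h *\<^sub>R F p"] by simp
      also have "\<dots> \<le> 6 * \<epsilon> * \<bar>h\<bar>" using inner[OF s] inner[OF x0] by (simp add: \<psi>'_def)
      finally show "norm (\<psi>' s - \<psi>' x0) \<le> 6 * \<epsilon> * \<bar>h\<bar>" .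
    next
      show "closed_segment x0 (x0 + h) \<subseteq> ball x0 \<delta>" using seg_ball h .
      show "x0 \<in> ball x0 \<delta>" using \<delta> by simp
    qed
    moreover have hh: "\<bar>h\<bar> * (c * \<bar>h\<bar>) = c * (h * h)" for c
    proof -
      have "\<bar>h\<bar> * (c * \<bar>h\<bar>) = c * (\<bar>h\<bar> * \<bar>h\<bar>)" by (simp only: mult_ac)
      also have "\<bar>h\<bar> * \<bar>h\<bar> = h * h" by (rule abs_mult_self_eq)
      finally show ?thesis .
    qed
    ultimately have A: "norm (\<psi> (x0 + h) - \<psi> x0 - h *\<^sub>R \<psi>' x0) \<le> 6 * \<epsilon> * (h * h)"
      by simp
    have B: "norm (h *\<^sub>R \<psi>' x0 - (h * h) *\<^sub>R F p) \<le> 3 * \<epsilon> * (h * h)"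
    proof -
      have x0: "\<bar>x0 - x0\<bar> < \<delta>" using \<delta> by simp
      have "h *\<^sub>R \<psi>' x0 - (h * h) *\<^sub>R F p = h *\<^sub>R (\<psi>' x0 - h *\<^sub>R F p)"
        by (simp add: scaleR_diff_right)
      then have "norm (h *\<^sub>R \<psi>' x0 - (h * h) *\<^sub>R F p) = \<bar>h\<bar> * norm (\<psi>' x0 - h *\<^sub>R F p)"
        by simp
      also have "\<dots> \<le> \<bar>h\<bar> * (3 * \<epsilon> * \<bar>h\<bar>)"
        using inner[OF x0] by (intro mult_left_mono) (auto simp: \<psi>'_def)
      also have "\<dots> = 3 * \<epsilon> * (h * h)" by (rule hh)
      finally show ?thesis .
    qed
    have "norm (\<psi> (x0 + h) - \<psi> x0 - (h * h) *\<^sub>R F p)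
        \<le> norm (\<psi> (x0 + h) - \<psi> x0 - h *\<^sub>R \<psi>' x0) + norm (h *\<^sub>R \<psi>' x0 - (h * h) *\<^sub>R F p)"
      by (rule order_trans[OF _ norm_triangle_ineq]) (simp add: algebra_simps)
    also have "\<dots> \<le> 9 * \<epsilon> * (h * h)" using A B by simp
    finally show "norm (f (setc i (coord i p + h) (setc j (coord j p + h) p))
         - f (setc i (coord i p + h) (setc j (coord j p) p))
         - (f (setc i (coord i p) (setc j (coord j p + h) p)) - f (setc i (coord i p) (setc j (coord j p) p)))
         - (h * h) *\<^sub>R pd j (pd i f) p) \<le> 9 * \<epsilon> * (h * h)"
      by (simp add: \<psi>_def \<Phi>_def x0_def y0_def F_def)
  qed
qed



lemma clairaut:
  fixes f :: "pt \<Rightarrow> 'a::real_normed_vector"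
  assumes U: "open U" and f: "Ck 2 U f" and p: "p \<in> U" and ij: "i < 3" "j < 3"
  shows "pd i (pd j f) p = pd j (pd i f) p"
proof (cases "i = j")
  case True then show ?thesis by simp
next
  case False
  show ?thesis
  proof (rule ccontr)
    assume ne: "pd i (pd j f) p \<noteq> pd j (pd i f) p"
    define D where "D = norm (pd j (pd i f) p - pd i (pd j f) p)"
    have D: "D > 0" using ne by (simp add: D_def)
    define \<epsilon> where "\<epsilon> = D / 36"
    have e: "\<epsilon> > 0" using D by (simp add: \<epsilon>_def)
    obtain d1 where d1: "d1 > 0" and E1: "\<And>h. \<bar>h\<bar> < d1 \<Longrightarrow>
     norm (f (setc i (coord i p + h) (setc j (coord j p + h) p))
         - f (setc i (coord i p + h) (setc j (coord j p) p))
         - (f (setc i (coord i p) (setc j (coord j p + h) p)) - f (setc i (coord i p) (setc j (coord j p) p)))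
         - (h * h) *\<^sub>R pd j (pd i f) p) \<le> 9 * \<epsilon> * (h * h)"
      using clairaut_est[OF U f p ij False e] by blast
    obtain d2 where d2: "d2 > 0" and E2: "\<And>h. \<bar>h\<bar> < d2 \<Longrightarrow>
     norm (f (setc j (coord j p + h) (setc i (coord i p + h) p))
         - f (setc j (coord j p + h) (setc i (coord i p) p))
         - (f (setc j (coord j p) (setc i (coord i p + h) p)) - f (setc j (coord j p) (setc i (coord i p) p)))
         - (h * h) *\<^sub>R pd i (pd j f) p) \<le> 9 * \<epsilon> * (h * h)"
      using clairaut_est[OF U f p ij(2,1) _ e] False by metis
    define h where "h = min d1 d2 / 2"
    have h: "h > 0" "\<bar>h\<bar> < d1" "\<bar>h\<bar> < d2" using d1 d2 by (auto simp: h_def)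
    have c1: "setc j a (setc i b p) = setc i b (setc j a p)" for a b
      using setc_comm[OF ij(2,1)] False by simp
    have c2: "setc i (coord i p) (setc j a p) = setc j a p" for a
      using c1[of a "coord i p"] by simp
    have c3: "setc j (coord j p) (setc i a p) = setc i a p" for a
      using c1[of "coord j p" a] by simp
    define \<Delta> where "\<Delta> = f (setc i (coord i p + h) (setc j (coord j p + h) p))
         - f (setc i (coord i p + h) (setc j (coord j p) p))
         - (f (setc i (coord i p) (setc j (coord j p + h) p)) - f (setc i (coord i p) (setc j (coord j p) p)))"
    have E1': "norm (\<Delta> - (h * h) *\<^sub>R pd j (pd i f) p) \<le> 9 * \<epsilon> * (h * h)"
      using E1[OF h(2)] by (simp add: \<Delta>_def c2 c3)
    have E2': "norm (\<Delta> - (h * h) *\<^sub>R pd i (pd j f) p) \<le> 9 * \<epsilon> * (h * h)"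
      using E2[OF h(3)] by (simp add: \<Delta>_def c1 c2 c3 algebra_simps)
    have "(h * h) * D = norm ((\<Delta> - (h * h) *\<^sub>R pd i (pd j f) p) - (\<Delta> - (h * h) *\<^sub>R pd j (pd i f) p))"
      by (simp add: D_def scaleR_diff_right[symmetric] abs_mult_self_eq)
    also have "\<dots> \<le> norm (\<Delta> - (h * h) *\<^sub>R pd i (pd j f) p) + norm (\<Delta> - (h * h) *\<^sub>R pd j (pd i f) p)"
      by (rule norm_triangle_ineq4)
    also have "\<dots> \<le> (h * h) * (D / 2)" using E1' E2' unfolding \<epsilon>_def by (simp add: algebra_simps)
    finally have "(h * h) * D \<le> (h * h) * (D / 2)" .
    moreover have "h * h > 0" using h by simp
    ultimately have "D \<le> D / 2" using mult_le_cancel_left_pos by blast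
    then show False using D by simp
  qed
qed



lemma smooth_cong: "open U \<Longrightarrow> smooth_fn U f \<Longrightarrow> \<forall>q\<in>U. f q = g q \<Longrightarrow> smooth_fn U g"
  unfolding smooth_fn_def using Ck_cong by blast
lemma smooth_const: "smooth_fn U (\<lambda>q. c)"
  unfolding smooth_fn_def using Ck_const by blast
lemma smooth_add: "open U \<Longrightarrow> smooth_fn U f \<Longrightarrow> smooth_fn U g \<Longrightarrow> smooth_fn U (\<lambda>q. f q + g q)"
  unfolding smooth_fn_def using Ck_add by blast
lemma smooth_diff: "open U \<Longrightarrow> smooth_fn U f \<Longrightarrow> smooth_fn U g \<Longrightarrow> smooth_fn U (\<lambda>q. f q - g q)"
  unfolding smooth_fn_def using Ck_diff by blast
lemma smooth_minus: "open U \<Longrightarrow> smooth_fn U f \<Longrightarrow> smooth_fn U (\<lambda>q. - f q)"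
  unfolding smooth_fn_def using Ck_minus by blast
lemma smooth_mult: "open U \<Longrightarrow> smooth_fn U f \<Longrightarrow> smooth_fn U g \<Longrightarrow> smooth_fn U (\<lambda>q. f q * g q :: real)"
  unfolding smooth_fn_def using Ck_mult by blast
lemma smooth_scaleR: "open U \<Longrightarrow> smooth_fn U f \<Longrightarrow> smooth_fn U g \<Longrightarrow> smooth_fn U (\<lambda>q. f q *\<^sub>R g q)"
  unfolding smooth_fn_def using Ck_scaleR by blast
lemma smooth_inner: "open U \<Longrightarrow> smooth_fn U f \<Longrightarrow> smooth_fn U g \<Longrightarrow> smooth_fn U (\<lambda>q. inner (f q) (g q :: real^3))"
  unfolding smooth_fn_def using Ck_inner by blast
lemma smooth_cross: "open U \<Longrightarrow> smooth_fn U f \<Longrightarrow> smooth_fn U g \<Longrightarrow> smooth_fn U (\<lambda>q. cross3 (f q) (g q))"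
  unfolding smooth_fn_def using Ck_cross by blast
lemma smooth_sum: "open U \<Longrightarrow> finite A \<Longrightarrow> (\<And>x. x \<in> A \<Longrightarrow> smooth_fn U (f x)) \<Longrightarrow> smooth_fn U (\<lambda>q. \<Sum>x\<in>A. f x q)"
  unfolding smooth_fn_def using Ck_sum by blast
lemma smooth_inverse: "open U \<Longrightarrow> \<forall>q\<in>U. f q \<noteq> 0 \<Longrightarrow> smooth_fn U f \<Longrightarrow> smooth_fn U (\<lambda>q. inverse (f q :: real))"
  unfolding smooth_fn_def using Ck_inverse by blast
lemma smooth_sqrt: "open U \<Longrightarrow> \<forall>q\<in>U. f q > 0 \<Longrightarrow> smooth_fn U f \<Longrightarrow> smooth_fn U (\<lambda>q. sqrt (f q))"
  unfolding smooth_fn_def using Ck_sqrt by blast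
lemma smooth_pd: "smooth_fn U f \<Longrightarrow> i < 3 \<Longrightarrow> smooth_fn U (pd i f)"
  unfolding smooth_fn_def by (metis Ck.simps(2))

lemma smooth_Ck1: "smooth_fn U f \<Longrightarrow> Ck (Suc 0) U f" by (simp add: smooth_fn_def)

lemma smooth_line: "smooth_fn U f \<Longrightarrow> p \<in> U \<Longrightarrow> i < 3 \<Longrightarrow>
   ((\<lambda>s. f (setc i s p)) has_vector_derivative pd i f p) (at (coord i p))"
  by (rule Ck_line[OF smooth_Ck1])

lemma (in bounded_bilinear) pd_bil:
  "smooth_fn U f \<Longrightarrow> smooth_fn U g \<Longrightarrow> p \<in> U \<Longrightarrow> i < 3 \<Longrightarrow>
   pd i (\<lambda>q. prod (f q) (g q)) p = prod (f p) (pd i g p) + prod (pd i f p) (g p)"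
  by (rule pd_eqI) (use has_vector_derivative[OF smooth_line smooth_line] in simp)

lemmas pd_mult = bounded_bilinear.pd_bil[OF bounded_bilinear_mult]
lemmas pd_scaleR = bounded_bilinear.pd_bil[OF bounded_bilinear_scaleR]
lemmas pd_inner = bounded_bilinear.pd_bil[OF bounded_bilinear_inner]

lemma pd_add: "smooth_fn U f \<Longrightarrow> smooth_fn U g \<Longrightarrow> p \<in> U \<Longrightarrow> i < 3 \<Longrightarrow>
   pd i (\<lambda>q. f q + g q) p = pd i f p + pd i g p"
  by (rule pd_eqI, rule has_vector_derivative_add[OF smooth_line smooth_line])
lemma pd_diff: "smooth_fn U f \<Longrightarrow> smooth_fn U g \<Longrightarrow> p \<in> U \<Longrightarrow> i < 3 \<Longrightarrow>
   pd i (\<lambda>q. f q - g q) p = pd i f p - pd i g p"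
  by (rule pd_eqI, rule has_vector_derivative_diff[OF smooth_line smooth_line])
lemma pd_minus: "smooth_fn U f \<Longrightarrow> p \<in> U \<Longrightarrow> i < 3 \<Longrightarrow>
   pd i (\<lambda>q. - f q) p = - pd i f p"
  by (rule pd_eqI, rule has_vector_derivative_minus[OF smooth_line])
lemma pd_sum: "(\<And>x. x \<in> A \<Longrightarrow> smooth_fn U (f x)) \<Longrightarrow> p \<in> U \<Longrightarrow> i < 3 \<Longrightarrow>
   pd i (\<lambda>q. \<Sum>x\<in>A. f x q) p = (\<Sum>x\<in>A. pd i (f x) p)"
  by (rule pd_eqI, rule has_vector_derivative_sum, rule smooth_line) auto
lemma pd_const: "pd i (\<lambda>q. c) p = 0"
  by (rule pd_eqI) simp
lemma pd_constU: "open U \<Longrightarrow> p \<in> U \<Longrightarrow> i < 3 \<Longrightarrow> \<forall>q\<in>U. f q = c \<Longrightarrow> pd i f p = 0"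
  using pd_cong[of U p i f "\<lambda>q. c"] pd_const by simp
lemma pd_comm: "open U \<Longrightarrow> smooth_fn U f \<Longrightarrow> p \<in> U \<Longrightarrow> i < 3 \<Longrightarrow> j < 3 \<Longrightarrow>
   pd i (pd j f) p = pd j (pd i f) p"
  by (rule clairaut) (auto simp: smooth_fn_def)



lemma sum2: "(\<Sum>x<(2::nat). f x) = f 0 + f 1"
  by (simp add: numeral_2_eq_2)

lemma cross_cross_expand: "cross3 (cross3 a b) c = (a \<bullet> c) *\<^sub>R b - (b \<bullet> c) *\<^sub>R a"
proof -
  have "cross3 (cross3 a b) c = - cross3 c (cross3 a b)" by (rule cross_skew)
  also have "\<dots> = (a \<bullet> c) *\<^sub>R b - (b \<bullet> c) *\<^sub>R a" by (simp add: Lagrange inner_commute)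
  finally show ?thesis .
qed

lemma orth_zero:
  fixes u x y :: "real^3"
  assumes "u \<bullet> x = 0" "u \<bullet> y = 0" "u \<bullet> cross3 x y = 0" "cross3 x y \<noteq> 0"
  shows "u = 0"
proof -
  define c where "c = cross3 x y"
  have "cross3 c u = (x \<bullet> u) *\<^sub>R y - (y \<bullet> u) *\<^sub>R x" unfolding c_def by (rule cross_cross_expand)
  also have "\<dots> = 0" using assms by (simp add: inner_commute)
  finally have cu: "cross3 c u = 0" .
  have "cross3 (cross3 c u) c = (c \<bullet> c) *\<^sub>R u - (u \<bullet> c) *\<^sub>R c" by (rule cross_cross_expand)
  then have "(c \<bullet> c) *\<^sub>R u = 0" using cu assms(3) by (simp add: c_def)
  moreover have "c \<bullet> c \<noteq> 0" using assms(4) by (simp add: c_def)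
  ultimately show ?thesis by simp
qed

locale surf =
  fixes R :: "pt \<Rightarrow> real^3" and U :: "pt set"
  assumes U: "open U" and sR: "smooth_fn U R"
    and nd: "\<forall>p\<in>U. cross3 (Sv R 0 p) (Sv R 1 p) \<noteq> 0"
begin

lemma Sv_s: "a < 3 \<Longrightarrow> smooth_fn U (Sv R a)"
  unfolding Sv_def by (rule smooth_pd[OF sR])

lemma Vel_s: "smooth_fn U (Vel R)"
  unfolding Vel_def[abs_def] using smooth_pd[OF sR, of 2] by simp

lemma metric_s: "a < 3 \<Longrightarrow> b < 3 \<Longrightarrow> smooth_fn U (metric R a b)"
  unfolding metric_def[abs_def] by (intro smooth_inner U Sv_s)

lemma det_eq: "metric_det R p = (norm (cross3 (Sv R 0 p) (Sv R 1 p)))\<^sup>2"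
proof -
  have "(norm (cross3 (Sv R 0 p) (Sv R 1 p)))\<^sup>2 = (norm (Sv R 0 p))\<^sup>2 * (norm (Sv R 1 p))\<^sup>2 - (Sv R 0 p \<bullet> Sv R 1 p)\<^sup>2"
    by (rule norm_cross)
  then have "cross3 (Sv R 0 p) (Sv R 1 p) \<bullet> cross3 (Sv R 0 p) (Sv R 1 p)
      = (Sv R 0 p \<bullet> Sv R 0 p) * (Sv R 1 p \<bullet> Sv R 1 p) - (Sv R 0 p \<bullet> Sv R 1 p) * (Sv R 0 p \<bullet> Sv R 1 p)"
    unfolding power2_norm_eq_inner by (simp add: power2_eq_square)
  then show ?thesis
    by (simp add: metric_det_def metric_def inner_commute power2_norm_eq_inner)
qed

lemma det_pos: "p \<in> U \<Longrightarrow> metric_det R p > 0"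
proof -
  assume "p \<in> U"
  then have "cross3 (Sv R 0 p) (Sv R 1 p) \<noteq> 0" using nd by blast
  then show ?thesis unfolding det_eq by simp
qed

lemma det_s: "smooth_fn U (metric_det R)"
  unfolding metric_det_def[abs_def] by (intro smooth_diff smooth_mult U metric_s) auto

lemma minv_eq: "metric_inv R a b p =
   (if a = b then metric R (1 - a) (1 - a) p else - metric R a b p) * inverse (metric_det R p)"
  by (simp add: metric_inv_def divide_inverse)

lemma minv_s: "a < 2 \<Longrightarrow> b < 2 \<Longrightarrow> smooth_fn U (metric_inv R a b)"
proof -
  assume ab: "a < 2" "b < 2"
  have n: "smooth_fn U (\<lambda>p. if a = b then metric R (1 - a) (1 - a) p else - metric R a b p)"
    using ab by (cases "a = b") (auto intro!: metric_s smooth_minus U)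
  have dnz: "\<forall>q\<in>U. metric_det R q \<noteq> 0"
  proof
    fix q assume "q \<in> U" then show "metric_det R q \<noteq> 0" using det_pos[of q] by simp
  qed
  have i: "smooth_fn U (\<lambda>p. inverse (metric_det R p))"
    by (rule smooth_inverse[OF U dnz det_s])
  have "smooth_fn U (\<lambda>p. (if a = b then metric R (1 - a) (1 - a) p else - metric R a b p) * inverse (metric_det R p))"
    by (rule smooth_mult[OF U n i])
  then show ?thesis unfolding minv_eq[abs_def] by simp
qed

lemma Sup_s: "a < 2 \<Longrightarrow> smooth_fn U (Sup R a)"
  unfolding Sup_def[abs_def] by (intro smooth_sum smooth_scaleR U minv_s Sv_s) auto

lemma Nrm_eq: "Nrm R p = inverse (sqrt (cross3 (Sv R 0 p) (Sv R 1 p) \<bullet> cross3 (Sv R 0 p) (Sv R 1 p)))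
     *\<^sub>R cross3 (Sv R 0 p) (Sv R 1 p)"
  by (simp add: Nrm_def Let_def norm_eq_sqrt_inner)

lemma Nrm_s: "smooth_fn U (Nrm R)"
proof -
  have c: "smooth_fn U (\<lambda>p. cross3 (Sv R 0 p) (Sv R 1 p))" by (intro smooth_cross U Sv_s) auto
  have cc: "smooth_fn U (\<lambda>p. cross3 (Sv R 0 p) (Sv R 1 p) \<bullet> cross3 (Sv R 0 p) (Sv R 1 p))"
    by (intro smooth_inner U c)
  have pos: "\<forall>p\<in>U. cross3 (Sv R 0 p) (Sv R 1 p) \<bullet> cross3 (Sv R 0 p) (Sv R 1 p) > 0" using nd by simp
  have "smooth_fn U (\<lambda>p. inverse (sqrt (cross3 (Sv R 0 p) (Sv R 1 p) \<bullet> cross3 (Sv R 0 p) (Sv R 1 p)))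
     *\<^sub>R cross3 (Sv R 0 p) (Sv R 1 p))"
    using pos by (intro smooth_scaleR U c smooth_inverse smooth_sqrt cc) auto
  then show ?thesis unfolding Nrm_eq[abs_def] by simp
qed

lemma Chr_s: "c < 2 \<Longrightarrow> i < 3 \<Longrightarrow> g < 3 \<Longrightarrow> smooth_fn U (Chr R c i g)"
  unfolding Chr_def[abs_def] by (intro smooth_inner U Sup_s smooth_pd Sv_s)

lemma cov_basis_s: "a < 3 \<Longrightarrow> b < 3 \<Longrightarrow> smooth_fn U (cov_basis R a b)"
  unfolding cov_basis_def[abs_def]
  by (intro smooth_diff smooth_sum smooth_scaleR U smooth_pd Sv_s Chr_s) auto

lemma Bcurv_s: "a < 3 \<Longrightarrow> b < 3 \<Longrightarrow> smooth_fn U (Bcurv R a b)"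
  unfolding Bcurv_def[abs_def] by (intro smooth_inner U Nrm_s cov_basis_s)

lemma Bmixed_s: "b < 2 \<Longrightarrow> a < 3 \<Longrightarrow> smooth_fn U (Bmixed R b a)"
  unfolding Bmixed_def[abs_def] by (intro smooth_sum smooth_mult U minv_s Bcurv_s) auto

lemma Cn_s: "smooth_fn U (Cn R)"
  unfolding Cn_def[abs_def] by (intro smooth_inner U Vel_s Nrm_s)

lemma Vup_s: "a < 2 \<Longrightarrow> smooth_fn U (Vup R a)"
  unfolding Vup_def[abs_def] by (intro smooth_inner U Vel_s Sup_s)

lemma cov_up_s: "(\<forall>c<2. smooth_fn U (psi c)) \<Longrightarrow> a < 3 \<Longrightarrow> b < 2 \<Longrightarrow> smooth_fn U (cov_up R a psi b)"
  unfolding cov_up_def[abs_def]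
  by (intro smooth_add smooth_sum smooth_mult U smooth_pd Chr_s) auto

lemma Vup_all_s: "\<forall>c<2. smooth_fn U (Vup R c)" using Vup_s by blast

lemma Chr_dot_s: "a < 2 \<Longrightarrow> b < 2 \<Longrightarrow> smooth_fn U (Chr_dot R a b)"
  unfolding Chr_dot_def[abs_def]
  by (intro smooth_diff smooth_mult U cov_up_s Vup_all_s Cn_s Bmixed_s) auto

end



context surf begin

lemma metric_sym: "metric R a b p = metric R b a p"
  by (simp add: metric_def inner_commute)

lemma minv_sym: "metric_inv R a b p = metric_inv R b a p"
  by (simp add: metric_inv_def metric_sym)

lemma det_nz: "p \<in> U \<Longrightarrow> metric_det R p \<noteq> 0"
  using det_pos[of p] by simp

lemma two_cases: "(a::nat) < 2 \<Longrightarrow> a = 0 \<or> a = 1" by auto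

lemma inv2:
  fixes x y z :: real assumes d: "x * z - y * y \<noteq> 0"
  shows "z / (x * z - y * y) * x + - y / (x * z - y * y) * y = 1"
    and "z / (x * z - y * y) * y + - y / (x * z - y * y) * z = 0"
    and "- y / (x * z - y * y) * x + x / (x * z - y * y) * y = 0"
    and "- y / (x * z - y * y) * y + x / (x * z - y * y) * z = 1"
    and "x * (z / (x * z - y * y)) + y * (- y / (x * z - y * y)) = 1"
    and "x * (- y / (x * z - y * y)) + y * (x / (x * z - y * y)) = 0"
    and "y * (z / (x * z - y * y)) + z * (- y / (x * z - y * y)) = 0"
    and "y * (- y / (x * z - y * y)) + z * (x / (x * z - y * y)) = 1"
proof -
  define D where "D = x * z - y * y"
  have D: "D \<noteq> 0" using d by (simp add: D_def)
  have e: "z * x - y * y = D" "x * z - y * y = D" by (simp_all add: D_def mult.commute)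
  show "z / (x * z - y * y) * x + - y / (x * z - y * y) * y = 1"
    unfolding D_def[symmetric] using D e by (simp add: field_simps)
  show "z / (x * z - y * y) * y + - y / (x * z - y * y) * z = 0"
    unfolding D_def[symmetric] using D by (simp add: field_simps)
  show "- y / (x * z - y * y) * x + x / (x * z - y * y) * y = 0"
    unfolding D_def[symmetric] using D by (simp add: field_simps)
  show "- y / (x * z - y * y) * y + x / (x * z - y * y) * z = 1"
    unfolding D_def[symmetric] using D e by (simp add: field_simps)
  show "x * (z / (x * z - y * y)) + y * (- y / (x * z - y * y)) = 1"
    unfolding D_def[symmetric] using D e by (simp add: field_simps)
  show "x * (- y / (x * z - y * y)) + y * (x / (x * z - y * y)) = 0"
    unfolding D_def[symmetric] using D by (simp add: field_simps)
  show "y * (z / (x * z - y * y)) + z * (- y / (x * z - y * y)) = 0"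
    unfolding D_def[symmetric] using D by (simp add: field_simps)
  show "y * (- y / (x * z - y * y)) + z * (x / (x * z - y * y)) = 1"
    unfolding D_def[symmetric] using D e by (simp add: field_simps)
qed

lemma m10: "metric R (Suc 0) 0 p = metric R 0 (Suc 0) p" "metric R 1 0 p = metric R 0 1 p"
  by (simp_all add: metric_sym)

lemma minv_explicit:
  "metric_inv R 0 0 p = metric R 1 1 p / metric_det R p"
  "metric_inv R 0 1 p = - metric R 0 1 p / metric_det R p"
  "metric_inv R 1 0 p = - metric R 0 1 p / metric_det R p"
  "metric_inv R 1 1 p = metric R 0 0 p / metric_det R p"
  "metric_det R p = metric R 0 0 p * metric R 1 1 p - metric R 0 1 p * metric R 0 1 p"
  by (simp_all add: metric_inv_def metric_det_def m10)

lemma MinvR: "p \<in> U \<Longrightarrow> a < 2 \<Longrightarrow> b < 2 \<Longrightarrow>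
   (\<Sum>c<2. metric_inv R a c p * metric R c b p) = (if a = b then 1 else 0)"
proof -
  assume h: "p \<in> U" "a < 2" "b < 2"
  have d: "metric R 0 0 p * metric R 1 1 p - metric R 0 1 p * metric R 0 1 p \<noteq> 0"
    using det_nz[OF h(1)] by (simp add: minv_explicit(5))
  note I = inv2[OF d]
  show ?thesis using h(2,3) I
    by (auto dest!: two_cases simp only: sum2 minv_explicit(1-4) minv_explicit(5) m10) simp_all
qed

lemma MinvL: "p \<in> U \<Longrightarrow> a < 2 \<Longrightarrow> b < 2 \<Longrightarrow>
   (\<Sum>c<2. metric R a c p * metric_inv R c b p) = (if a = b then 1 else 0)"
proof -
  assume h: "p \<in> U" "a < 2" "b < 2"
  have d: "metric R 0 0 p * metric R 1 1 p - metric R 0 1 p * metric R 0 1 p \<noteq> 0"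
    using det_nz[OF h(1)] by (simp add: minv_explicit(5))
  note I = inv2[OF d]
  show ?thesis using h(2,3) I
    by (auto dest!: two_cases simp only: sum2 minv_explicit(1-4) minv_explicit(5) m10) simp_all
qed

lemma SupSv: "p \<in> U \<Longrightarrow> a < 2 \<Longrightarrow> b < 2 \<Longrightarrow> Sup R a p \<bullet> Sv R b p = (if a = b then 1 else 0)"
proof -
  assume h: "p \<in> U" "a < 2" "b < 2"
  have "Sup R a p \<bullet> Sv R b p = (\<Sum>c<2. metric_inv R a c p * metric R c b p)"
    by (simp add: Sup_def inner_sum_left metric_def)
  then show ?thesis using MinvR[OF h] by simp
qed

lemma SvSup: "p \<in> U \<Longrightarrow> a < 2 \<Longrightarrow> b < 2 \<Longrightarrow> Sv R b p \<bullet> Sup R a p = (if a = b then 1 else 0)"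
  using SupSv by (simp add: inner_commute)

lemma Sv_from_Sup: "p \<in> U \<Longrightarrow> b < 2 \<Longrightarrow> Sv R b p = (\<Sum>c<2. metric R b c p *\<^sub>R Sup R c p)"
proof -
  assume h: "p \<in> U" "b < 2"
  have "(\<Sum>c<2. metric R b c p *\<^sub>R Sup R c p)
      = (\<Sum>c<2. metric R b c p * metric_inv R c 0 p) *\<^sub>R Sv R 0 p
        + (\<Sum>c<2. metric R b c p * metric_inv R c 1 p) *\<^sub>R Sv R 1 p"
    by (simp add: Sup_def sum2 algebra_simps)
  also have "\<dots> = Sv R b p" using MinvL[OF h(1) h(2)] h(2) by (auto dest!: two_cases)
  finally show ?thesis by simp
qed

lemma minv_Sup: "p \<in> U \<Longrightarrow> a < 2 \<Longrightarrow> b < 2 \<Longrightarrow> metric_inv R a b p = Sup R a p \<bullet> Sup R b p"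
proof -
  assume h: "p \<in> U" "a < 2" "b < 2"
  have "Sup R a p \<bullet> Sup R b p = (\<Sum>c<2. metric_inv R a c p * (Sv R c p \<bullet> Sup R b p))"
    by (simp add: Sup_def[of R a] inner_sum_left)
  also have "\<dots> = metric_inv R a b p" using h SvSup[OF h(1) h(3)]
    by (auto dest!: two_cases simp: sum2)
  finally show ?thesis by simp
qed

lemma NSv: "Nrm R p \<bullet> Sv R a p = 0" if "a < 2"
  using that by (auto dest!: two_cases simp: Nrm_def Let_def dot_cross_self inner_commute)

lemma SvN: "Sv R a p \<bullet> Nrm R p = 0" if "a < 2"
  using NSv[OF that] by (simp add: inner_commute)

lemma NN: "p \<in> U \<Longrightarrow> Nrm R p \<bullet> Nrm R p = 1"
proof -
  assume "p \<in> U"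
  then have c: "cross3 (Sv R 0 p) (Sv R 1 p) \<noteq> 0" using nd by blast
  have "Nrm R p = sgn (cross3 (Sv R 0 p) (Sv R 1 p))" by (simp add: Nrm_def Let_def sgn_div_norm)
  then have "norm (Nrm R p) = 1" using c by (simp add: norm_sgn)
  then show ?thesis by (simp add: power2_norm_eq_inner[symmetric])
qed

lemma SupN: "Sup R a p \<bullet> Nrm R p = 0"
  by (simp add: Sup_def inner_sum_left SvN)

lemma NSup: "Nrm R p \<bullet> Sup R a p = 0"
  using SupN by (simp add: inner_commute)

lemma decomp: "p \<in> U \<Longrightarrow> w = (\<Sum>c<2. (Sup R c p \<bullet> w) *\<^sub>R Sv R c p) + (Nrm R p \<bullet> w) *\<^sub>R Nrm R p"
proof -
  assume p: "p \<in> U"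
  define u where "u = w - ((\<Sum>c<2. (Sup R c p \<bullet> w) *\<^sub>R Sv R c p) + (Nrm R p \<bullet> w) *\<^sub>R Nrm R p)"
  have uS: "u \<bullet> Sv R b p = 0" if b: "b < 2" for b
  proof -
    have "u \<bullet> Sv R b p = w \<bullet> Sv R b p - (\<Sum>c<2. (Sup R c p \<bullet> w) * metric R c b p)"
      by (simp add: u_def inner_diff_left inner_add_left inner_sum_left NSv[OF b] metric_def)
    also have "(\<Sum>c<2. (Sup R c p \<bullet> w) * metric R c b p) = (\<Sum>c<2. metric R b c p *\<^sub>R Sup R c p) \<bullet> w"
      by (simp add: inner_sum_left metric_sym mult.commute)
    also have "\<dots> = Sv R b p \<bullet> w" using Sv_from_Sup[OF p b] by simp
    finally show ?thesis by (simp add: inner_commute)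
  qed
  have uN: "u \<bullet> Nrm R p = 0"
  proof -
    have "u \<bullet> Nrm R p = Nrm R p \<bullet> u" by (rule inner_commute)
    also have "\<dots> = 0"
      by (simp add: u_def inner_diff_right inner_add_right sum2 NSv NN[OF p])
    finally show ?thesis .
  qed
  have c: "cross3 (Sv R 0 p) (Sv R 1 p) \<noteq> 0" using nd p by blast
  have uc: "u \<bullet> cross3 (Sv R 0 p) (Sv R 1 p) = 0"
  proof -
    have "cross3 (Sv R 0 p) (Sv R 1 p) = norm (cross3 (Sv R 0 p) (Sv R 1 p)) *\<^sub>R Nrm R p"
      using c by (simp add: Nrm_def Let_def)
    then have "u \<bullet> cross3 (Sv R 0 p) (Sv R 1 p) = norm (cross3 (Sv R 0 p) (Sv R 1 p)) * (u \<bullet> Nrm R p)"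
      by (metis inner_scaleR_right)
    then show ?thesis using uN by simp
  qed
  have "u = 0" by (rule orth_zero[OF uS uS uc c]) auto
  then show ?thesis by (simp add: u_def)
qed

end



definition BBx :: "(pt \<Rightarrow> real^3) \<Rightarrow> nat \<Rightarrow> nat \<Rightarrow> pt \<Rightarrow> real" where
  "BBx R i g p = Nrm R p \<bullet> pd i (Sv R g) p"

definition Mx :: "(pt \<Rightarrow> real^3) \<Rightarrow> nat \<Rightarrow> nat \<Rightarrow> pt \<Rightarrow> real" where
  "Mx R b j p = (\<Sum>c<2. metric_inv R b c p * BBx R j c p)"

context surf begin

lemma pdU_inner: "smooth_fn U f \<Longrightarrow> smooth_fn U g \<Longrightarrow> p \<in> U \<Longrightarrow> i < 3 \<Longrightarrow>
   pd i (\<lambda>q. f q \<bullet> g q) p = f p \<bullet> pd i g p + pd i f p \<bullet> g p"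
  by (rule pd_inner)
lemma pdU_mult: "smooth_fn U f \<Longrightarrow> smooth_fn U g \<Longrightarrow> p \<in> U \<Longrightarrow> i < 3 \<Longrightarrow>
   pd i (\<lambda>q. f q * g q :: real) p = f p * pd i g p + pd i f p * g p"
  by (rule pd_mult)
lemma pdU_add: "smooth_fn U f \<Longrightarrow> smooth_fn U g \<Longrightarrow> p \<in> U \<Longrightarrow> i < 3 \<Longrightarrow>
   pd i (\<lambda>q. f q + g q) p = pd i f p + pd i g p"
  by (rule pd_add)
lemma pdU_diff: "smooth_fn U f \<Longrightarrow> smooth_fn U g \<Longrightarrow> p \<in> U \<Longrightarrow> i < 3 \<Longrightarrow>
   pd i (\<lambda>q. f q - g q) p = pd i f p - pd i g p"
  by (rule pd_diff)
lemma pdU_sum: "(\<And>x. x \<in> A \<Longrightarrow> smooth_fn U (f x)) \<Longrightarrow> p \<in> U \<Longrightarrow> i < 3 \<Longrightarrow>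
   pd i (\<lambda>q. \<Sum>x\<in>A. f x q) p = (\<Sum>x\<in>A. pd i (f x) p)"
  by (rule pd_sum)

lemma Chr_fun: "Chr R c i g = (\<lambda>q. Sup R c q \<bullet> pd i (Sv R g) q)"
  by (rule ext) (simp add: Chr_def)

lemma BBx_fun: "BBx R i g = (\<lambda>q. Nrm R q \<bullet> pd i (Sv R g) q)"
  by (rule ext) (simp add: BBx_def)

lemma BBx_s: "i < 3 \<Longrightarrow> g < 3 \<Longrightarrow> smooth_fn U (BBx R i g)"
  unfolding BBx_fun by (intro smooth_inner U Nrm_s smooth_pd Sv_s)

lemma dSupSv: "p \<in> U \<Longrightarrow> b < 2 \<Longrightarrow> c < 2 \<Longrightarrow> j < 3 \<Longrightarrow>
    pd j (Sup R b) p \<bullet> Sv R c p = - (Sup R b p \<bullet> pd j (Sv R c) p)"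
proof -
  assume h: "p \<in> U" "b < 2" "c < 2" "j < 3"
  have "\<forall>q\<in>U. Sup R b q \<bullet> Sv R c q = (if b = c then 1 else 0)" using SupSv h(2,3) by blast
  from pd_constU[OF U h(1) h(4) this] have "pd j (\<lambda>q. Sup R b q \<bullet> Sv R c q) p = 0" .
  moreover have "pd j (\<lambda>q. Sup R b q \<bullet> Sv R c q) p = Sup R b p \<bullet> pd j (Sv R c) p + pd j (Sup R b) p \<bullet> Sv R c p"
    using h by (intro pdU_inner Sup_s Sv_s) auto
  ultimately show ?thesis by simp
qed

lemma dSupN: "p \<in> U \<Longrightarrow> b < 2 \<Longrightarrow> j < 3 \<Longrightarrow>
    pd j (Sup R b) p \<bullet> Nrm R p = - (Sup R b p \<bullet> pd j (Nrm R) p)"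
proof -
  assume h: "p \<in> U" "b < 2" "j < 3"
  have "pd j (\<lambda>q. Sup R b q \<bullet> Nrm R q) p = 0"
    by (rule pd_constU[OF U h(1) h(3)]) (use SupN in auto)
  moreover have "pd j (\<lambda>q. Sup R b q \<bullet> Nrm R q) p = Sup R b p \<bullet> pd j (Nrm R) p + pd j (Sup R b) p \<bullet> Nrm R p"
    using h by (intro pdU_inner Sup_s Nrm_s) auto
  ultimately show ?thesis by simp
qed

lemma dNS: "p \<in> U \<Longrightarrow> c < 2 \<Longrightarrow> j < 3 \<Longrightarrow>
    pd j (Nrm R) p \<bullet> Sv R c p = - BBx R j c p"
proof -
  assume h: "p \<in> U" "c < 2" "j < 3"
  have "pd j (\<lambda>q. Nrm R q \<bullet> Sv R c q) p = 0"
    by (rule pd_constU[OF U h(1) h(3)]) (use NSv h in auto)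
  moreover have "pd j (\<lambda>q. Nrm R q \<bullet> Sv R c q) p = Nrm R p \<bullet> pd j (Sv R c) p + pd j (Nrm R) p \<bullet> Sv R c p"
    using h by (intro pdU_inner Nrm_s Sv_s) auto
  ultimately show ?thesis by (simp add: BBx_def)
qed

lemma dNS': "p \<in> U \<Longrightarrow> c < 2 \<Longrightarrow> j < 3 \<Longrightarrow>
    Sv R c p \<bullet> pd j (Nrm R) p = - BBx R j c p"
  using dNS by (simp add: inner_commute)

lemma dNN: "p \<in> U \<Longrightarrow> j < 3 \<Longrightarrow> pd j (Nrm R) p \<bullet> Nrm R p = 0"
proof -
  assume h: "p \<in> U" "j < 3"
  have "pd j (\<lambda>q. Nrm R q \<bullet> Nrm R q) p = 0"
    by (rule pd_constU[OF U h(1) h(2)]) (use NN in auto)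
  moreover have "pd j (\<lambda>q. Nrm R q \<bullet> Nrm R q) p = Nrm R p \<bullet> pd j (Nrm R) p + pd j (Nrm R) p \<bullet> Nrm R p"
    using h by (intro pdU_inner Nrm_s) auto
  ultimately show ?thesis by (simp add: inner_commute)
qed

lemma dNw: "p \<in> U \<Longrightarrow> j < 3 \<Longrightarrow>
    pd j (Nrm R) p \<bullet> w = - (\<Sum>c<2. (Sup R c p \<bullet> w) * BBx R j c p)"
proof -
  assume h: "p \<in> U" "j < 3"
  have "pd j (Nrm R) p \<bullet> w = pd j (Nrm R) p \<bullet>
      ((\<Sum>c<2. (Sup R c p \<bullet> w) *\<^sub>R Sv R c p) + (Nrm R p \<bullet> w) *\<^sub>R Nrm R p)"
    using decomp[OF h(1), of w] by simp
  also have "\<dots> = - (\<Sum>c<2. (Sup R c p \<bullet> w) * BBx R j c p)"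
    using h by (simp add: inner_add_right sum2 dNS dNN)
  finally show ?thesis .
qed

lemma dSupN': "p \<in> U \<Longrightarrow> b < 2 \<Longrightarrow> j < 3 \<Longrightarrow> pd j (Sup R b) p \<bullet> Nrm R p = Mx R b j p"
proof -
  assume h: "p \<in> U" "b < 2" "j < 3"
  have "pd j (Sup R b) p \<bullet> Nrm R p = - (Sup R b p \<bullet> pd j (Nrm R) p)" using dSupN h by blast
  also have "Sup R b p \<bullet> pd j (Nrm R) p = (\<Sum>c<2. metric_inv R b c p * (Sv R c p \<bullet> pd j (Nrm R) p))"
    by (simp add: Sup_def inner_sum_left)
  also have "\<dots> = - Mx R b j p" using h by (simp add: sum2 dNS' Mx_def)
  finally show ?thesis by simp
qed

lemma dSupw: "p \<in> U \<Longrightarrow> b < 2 \<Longrightarrow> j < 3 \<Longrightarrow>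
    pd j (Sup R b) p \<bullet> w = - (\<Sum>c<2. (Sup R c p \<bullet> w) * Chr R b j c p) + (Nrm R p \<bullet> w) * Mx R b j p"
proof -
  assume h: "p \<in> U" "b < 2" "j < 3"
  have "pd j (Sup R b) p \<bullet> w = pd j (Sup R b) p \<bullet>
      ((\<Sum>c<2. (Sup R c p \<bullet> w) *\<^sub>R Sv R c p) + (Nrm R p \<bullet> w) *\<^sub>R Nrm R p)"
    using decomp[OF h(1), of w] by simp
  also have "\<dots> = - (\<Sum>c<2. (Sup R c p \<bullet> w) * Chr R b j c p) + (Nrm R p \<bullet> w) * Mx R b j p"
    using h by (simp add: inner_add_right sum2 dSupSv dSupN' Chr_def)
  finally show ?thesis .
qed

lemma gaussT: "p \<in> U \<Longrightarrow> b < 2 \<Longrightarrow> i < 3 \<Longrightarrow> j < 3 \<Longrightarrow> g < 3 \<Longrightarrow>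
   pd j (Chr R b i g) p = Sup R b p \<bullet> pd j (pd i (Sv R g)) p
      - (\<Sum>c<2. Chr R c i g p * Chr R b j c p) + BBx R i g p * Mx R b j p"
proof -
  assume h: "p \<in> U" "b < 2" "i < 3" "j < 3" "g < 3"
  have "pd j (Chr R b i g) p = Sup R b p \<bullet> pd j (pd i (Sv R g)) p + pd j (Sup R b) p \<bullet> pd i (Sv R g) p"
    unfolding Chr_fun using h by (intro pdU_inner Sup_s smooth_pd Sv_s) auto
  also have "pd j (Sup R b) p \<bullet> pd i (Sv R g) p = - (\<Sum>c<2. Chr R c i g p * Chr R b j c p) + BBx R i g p * Mx R b j p"
    using dSupw[OF h(1,2,4)] by (simp add: Chr_def BBx_def)
  finally show ?thesis by simp
qed

lemma gauss: "p \<in> U \<Longrightarrow> b < 2 \<Longrightarrow> i < 3 \<Longrightarrow> j < 3 \<Longrightarrow> g < 3 \<Longrightarrow>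
   pd j (Chr R b i g) p - pd i (Chr R b j g) p
     + (\<Sum>e<2. Chr R b j e p * Chr R e i g p) - (\<Sum>e<2. Chr R b i e p * Chr R e j g p)
   = BBx R i g p * Mx R b j p - BBx R j g p * Mx R b i p"
proof -
  assume h: "p \<in> U" "b < 2" "i < 3" "j < 3" "g < 3"
  have c: "pd j (pd i (Sv R g)) p = pd i (pd j (Sv R g)) p"
    using h by (intro pd_comm[OF U]) (auto intro: Sv_s)
  show ?thesis using gaussT[OF h] gaussT[OF h(1,2,4,3,5)] c by (simp add: sum2 algebra_simps)
qed

lemma codazzi: "p \<in> U \<Longrightarrow> i < 3 \<Longrightarrow> j < 3 \<Longrightarrow> g < 3 \<Longrightarrow>
   pd j (BBx R i g) p + (\<Sum>c<2. Chr R c i g p * BBx R j c p)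
   = pd i (BBx R j g) p + (\<Sum>c<2. Chr R c j g p * BBx R i c p)"
proof -
  assume h: "p \<in> U" "i < 3" "j < 3" "g < 3"
  have T: "pd j (BBx R i g) p = Nrm R p \<bullet> pd j (pd i (Sv R g)) p - (\<Sum>c<2. Chr R c i g p * BBx R j c p)"
    if "i < 3" "j < 3" for i j
  proof -
    have "pd j (BBx R i g) p = Nrm R p \<bullet> pd j (pd i (Sv R g)) p + pd j (Nrm R) p \<bullet> pd i (Sv R g) p"
      unfolding BBx_fun using h that by (intro pdU_inner Nrm_s smooth_pd Sv_s) auto
    also have "pd j (Nrm R) p \<bullet> pd i (Sv R g) p = - (\<Sum>c<2. Chr R c i g p * BBx R j c p)"
      using dNw[OF h(1) that(2)] by (simp add: Chr_def)
    finally show ?thesis by simp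
  qed
  have c: "pd j (pd i (Sv R g)) p = pd i (pd j (Sv R g)) p"
    using h by (intro pd_comm[OF U]) (auto intro: Sv_s)
  show ?thesis using T[OF h(2,3)] T[OF h(3,2)] c by simp
qed

lemma pdpdR: "p \<in> U \<Longrightarrow> a < 3 \<Longrightarrow> g < 3 \<Longrightarrow> pd a (Sv R g) p = pd g (Sv R a) p"
  unfolding Sv_def by (rule pd_comm[OF U sR])

lemma Chr_sym: "p \<in> U \<Longrightarrow> a < 3 \<Longrightarrow> g < 3 \<Longrightarrow> Chr R c a g p = Chr R c g a p"
  by (simp add: Chr_def pdpdR)

lemma BBx_sym: "p \<in> U \<Longrightarrow> a < 3 \<Longrightarrow> g < 3 \<Longrightarrow> BBx R a g p = BBx R g a p"
  by (simp add: BBx_def pdpdR)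

lemma Bcurv_BB: "Bcurv R a g p = BBx R a g p"
  by (simp add: Bcurv_def BBx_def cov_basis_def inner_diff_right inner_sum_right NSv)

lemma Bmixed_M: "p \<in> U \<Longrightarrow> a < 2 \<Longrightarrow> Bmixed R b a p = Mx R b a p"
  by (simp add: Bmixed_def Mx_def sum2 Bcurv_BB BBx_sym)

lemma Chr_dot_eq: "p \<in> U \<Longrightarrow> c < 2 \<Longrightarrow> g < 2 \<Longrightarrow> Chr_dot R c g p = Chr R c 2 g p"
proof -
  assume h: "p \<in> U" "c < 2" "g < 2"
  have v: "pd g (Vup R c) p = Sup R c p \<bullet> pd g (Vel R) p + Vel R p \<bullet> pd g (Sup R c) p"
  proof -
    have "Vup R c = (\<lambda>q. Vel R q \<bullet> Sup R c q)" by (rule ext) (simp add: Vup_def)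
    then show ?thesis using h by (simp add: pdU_inner[OF Vel_s Sup_s] inner_commute)
  qed
  have w: "Vel R p \<bullet> pd g (Sup R c) p = - (\<Sum>e<2. Vup R e p * Chr R c g e p) + Cn R p * Mx R c g p"
    using dSupw[OF h(1,2), of g "Vel R p"] h by (simp add: inner_commute Vup_def Cn_def)
  have s: "pd g (Vel R) p = pd 2 (Sv R g) p"
    using pd_comm[OF U sR h(1), of g 2] h by (simp add: Vel_def[abs_def] Sv_def)
  show ?thesis using h
    by (simp add: Chr_dot_def cov_up_def v w s Chr_def Bmixed_M sum2 algebra_simps)
qed

lemma BB2: "p \<in> U \<Longrightarrow> g < 2 \<Longrightarrow> BBx R 2 g p = pd g (Cn R) p + (\<Sum>d<2. BBx R d g p * Vup R d p)"
proof -
  assume h: "p \<in> U" "g < 2"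
  have c: "pd g (Cn R) p = Vel R p \<bullet> pd g (Nrm R) p + pd g (Vel R) p \<bullet> Nrm R p"
  proof -
    have "Cn R = (\<lambda>q. Vel R q \<bullet> Nrm R q)" by (rule ext) (simp add: Cn_def)
    then show ?thesis using h by (simp add: pdU_inner[OF Vel_s Nrm_s])
  qed
  have w: "Vel R p \<bullet> pd g (Nrm R) p = - (\<Sum>e<2. Vup R e p * BBx R g e p)"
    using dNw[OF h(1), of g "Vel R p"] h by (simp add: inner_commute Vup_def)
  have s: "pd g (Vel R) p = pd 2 (Sv R g) p"
    using pd_comm[OF U sR h(1), of g 2] h by (simp add: Vel_def[abs_def] Sv_def)
  have e1: "BBx R 2 g p = pd g (Vel R) p \<bullet> Nrm R p" using s by (simp add: BBx_def inner_commute)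
  have e2: "BBx R g 0 p = BBx R 0 g p" "BBx R g 1 p = BBx R 1 g p"
    using BBx_sym[OF h(1), of g 0] BBx_sym[OF h(1), of g 1] h(2) by auto
  show ?thesis using c w e1 e2 by (simp add: sum2 algebra_simps)
qed

end



context surf begin

lemma Rdot_formula:
  assumes p: "p \<in> U" and abg: "a < 2" "b < 2" "g < 2"
  shows "Rdot R b a g p = Bcurv R a g p * grad_up R b (Cn R) p - Bmixed R b a p * pd g (Cn R) p"
proof -
  have cd: "pd a (Chr_dot R b g) p = pd a (Chr R b 2 g) p"
    using Chr_dot_eq abg by (intro pd_cong[OF U p]) auto
  have cov: "cov_ul R a (Chr_dot R) b g p = pd a (Chr R b 2 g) p
      + (\<Sum>d<2. Chr R b a d p * Chr R d 2 g p) - (\<Sum>d<2. Chr R d a g p * Chr R b 2 d p)"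
    using abg by (simp add: cov_ul_def cd sum2 Chr_dot_eq[OF p])
  have riem: "Riem R b g a d p = BBx R d g p * Mx R b a p - BBx R a g p * Mx R b d p" if "d < 2" for d
    unfolding Riem_def using gauss[OF p abg(2), of d a g] that abg by simp
  have time: "pd 2 (Chr R b a g) p - pd a (Chr R b 2 g) p
     + (\<Sum>e<2. Chr R b 2 e p * Chr R e a g p) - (\<Sum>e<2. Chr R b a e p * Chr R e 2 g p)
     = BBx R a g p * Mx R b 2 p - BBx R 2 g p * Mx R b a p"
    using gauss[OF p abg(2), of a 2 g] abg by simp
  have time': "pd 2 (Chr R b a g) p = pd a (Chr R b 2 g) p
     - (\<Sum>e<2. Chr R b 2 e p * Chr R e a g p) + (\<Sum>e<2. Chr R b a e p * Chr R e 2 g p)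
     + (BBx R a g p * Mx R b 2 p - BBx R 2 g p * Mx R b a p)"
    using time by (simp add: algebra_simps)
  have A: "Rdot R b a g p = BBx R a g p * Mx R b 2 p - BBx R 2 g p * Mx R b a p
      + (\<Sum>d<2. (BBx R d g p * Mx R b a p - BBx R a g p * Mx R b d p) * Vup R d p)"
    unfolding Rdot_def time' cov by (simp add: sum2 riem algebra_simps)
  have s10: "BBx R (Suc 0) 0 p = BBx R 0 (Suc 0) p" using BBx_sym[OF p, of 1 0] by simp
  have B20: "BBx R 2 0 p = pd 0 (Cn R) p + BBx R 0 0 p * Vup R 0 p + BBx R 0 1 p * Vup R 1 p"
    using BB2[OF p, of 0] s10 by (simp add: sum2)
  have B21: "BBx R 2 1 p = pd 1 (Cn R) p + BBx R 0 1 p * Vup R 0 p + BBx R 1 1 p * Vup R 1 p"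
    using BB2[OF p, of 1] by (simp add: sum2)
  have B2g: "BBx R 2 g p = pd g (Cn R) p + BBx R 0 g p * Vup R 0 p + BBx R 1 g p * Vup R 1 p"
    using BB2[OF p abg(3)] by (simp add: sum2)
  show ?thesis
    using A B20 B21 B2g abg
    by (simp add: Bcurv_BB Bmixed_M[OF p] grad_up_def Mx_def sum2 s10 algebra_simps)
qed

end



definition Kx :: "(pt \<Rightarrow> real^3) \<Rightarrow> nat \<Rightarrow> nat \<Rightarrow> nat \<Rightarrow> pt \<Rightarrow> real" where
  "Kx R d a g p = pd d (BBx R a g) p - (\<Sum>e<2. Chr R e d a p * BBx R e g p)
                                     - (\<Sum>e<2. Chr R e d g p * BBx R a e p)"

context surf begin

lemma pdBB_sym: "p \<in> U \<Longrightarrow> a < 3 \<Longrightarrow> g < 3 \<Longrightarrow> d < 3 \<Longrightarrow> pd d (BBx R a g) p = pd d (BBx R g a) p"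
  using BBx_sym by (intro pd_cong[OF U]) auto

lemma K_sym:
  assumes p: "p \<in> U" and h: "d < 2" "a < 2" "g < 2"
  shows "Kx R d a g p = Kx R g d a p"
proof -
  have cod: "pd d (BBx R g a) p + (\<Sum>c<2. Chr R c g a p * BBx R d c p)
           = pd g (BBx R d a) p + (\<Sum>c<2. Chr R c d a p * BBx R g c p)"
    using codazzi[OF p, of g d a] h by simp
  have S1: "(\<Sum>e<2. Chr R e d a p * BBx R e g p) = (\<Sum>c<2. Chr R c d a p * BBx R g c p)"
    by (rule sum.cong) (use BBx_sym[OF p] h in auto)
  have S2: "(\<Sum>e<2. Chr R e d g p * BBx R a e p) = (\<Sum>e<2. Chr R e g d p * BBx R e a p)"
    by (rule sum.cong) (use BBx_sym[OF p] Chr_sym[OF p] h in auto)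
  have P: "pd d (BBx R a g) p = pd d (BBx R g a) p" using pdBB_sym[OF p] h by auto
  show ?thesis unfolding Kx_def using cod S1 S2 P by simp
qed

lemma dminv:
  assumes p: "p \<in> U" and h: "b < 2" "c < 2" "g < 3"
  shows "pd g (metric_inv R b c) p = - (\<Sum>e<2. metric_inv R e c p * Chr R b g e p)
                                    - (\<Sum>e<2. metric_inv R e b p * Chr R c g e p)"
proof -
  have "pd g (metric_inv R b c) p = pd g (\<lambda>q. Sup R b q \<bullet> Sup R c q) p"
    using minv_Sup h by (intro pd_cong[OF U p]) auto
  also have "\<dots> = Sup R b p \<bullet> pd g (Sup R c) p + pd g (Sup R b) p \<bullet> Sup R c p"
    using h p by (intro pdU_inner Sup_s) auto
  also have "pd g (Sup R b) p \<bullet> Sup R c p = - (\<Sum>e<2. metric_inv R e c p * Chr R b g e p)"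
    using dSupw[OF p h(1,3), of "Sup R c p"] h p by (simp add: NSup sum2 minv_Sup)
  also have "Sup R b p \<bullet> pd g (Sup R c) p = - (\<Sum>e<2. metric_inv R e b p * Chr R c g e p)"
    using dSupw[OF p h(2,3), of "Sup R b p"] h p by (simp add: NSup sum2 minv_Sup inner_commute)
  finally show ?thesis by simp
qed

lemma Mx_fun: "Mx R b a = (\<lambda>q. \<Sum>c<2. metric_inv R b c q * BBx R a c q)"
  by (rule ext) (simp add: Mx_def)

lemma metcompat:
  assumes p: "p \<in> U" and h: "a < 2" "b < 2" "g < 2"
  shows "pd g (Mx R b a) p + (\<Sum>e<2. Chr R b g e p * Mx R e a p) - (\<Sum>e<2. Chr R e g a p * Mx R b e p)
       = (\<Sum>d<2. metric_inv R b d p * Kx R g d a p)"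
proof -
  have pM: "pd g (Mx R b a) p = (\<Sum>c<2. metric_inv R b c p * pd g (BBx R a c) p + pd g (metric_inv R b c) p * BBx R a c p)"
  proof -
    have "pd g (Mx R b a) p = (\<Sum>c<2. pd g (\<lambda>q. metric_inv R b c q * BBx R a c q) p)"
      unfolding Mx_fun using h p by (intro pdU_sum smooth_mult[OF U] minv_s BBx_s) auto
    also have "\<dots> = (\<Sum>c<2. metric_inv R b c p * pd g (BBx R a c) p + pd g (metric_inv R b c) p * BBx R a c p)"
      by (rule sum.cong) (use h p in \<open>auto intro!: pdU_mult minv_s BBx_s\<close>)
    finally show ?thesis .
  qed
  have r1: "pd g (BBx R a 0) p = pd g (BBx R 0 a) p" "pd g (BBx R a (Suc 0)) p = pd g (BBx R (Suc 0) a) p"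
    using pdBB_sym[OF p] h by auto
  have r2: "BBx R a 0 p = BBx R 0 a p" "BBx R a (Suc 0) p = BBx R (Suc 0) a p"
    "BBx R (Suc 0) 0 p = BBx R 0 (Suc 0) p"
    using BBx_sym[OF p] h by auto
  have r3: "metric_inv R 0 b p = metric_inv R b 0 p" "metric_inv R (Suc 0) b p = metric_inv R b (Suc 0) p"
    "metric_inv R (Suc 0) 0 p = metric_inv R 0 (Suc 0) p"
    using minv_sym by auto
  have r4: "Chr R e (Suc 0) 0 p = Chr R e 0 (Suc 0) p" for e
    using Chr_sym[OF p] by auto
  show ?thesis
    unfolding pM using h p
    by (simp add: dminv Kx_def Mx_def sum2 r1 r2 r3 r4 algebra_simps)
qed

end



context surf begin

lemma Bcurv_fun: "Bcurv R a g = BBx R a g"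
  by (rule ext) (simp add: Bcurv_BB)

lemma cov_formula:
  assumes p: "p \<in> U" and h: "a < 2" "b < 2" "g < 2"
  shows "(\<Sum>d<2. metric_inv R b d p * cov_ll R d (\<lambda>i j q. Cn R q * Bcurv R i j q) a g p)
         - cov_ul R g (\<lambda>i j q. Cn R q * Bmixed R i j q) b a p
       = Bcurv R a g p * grad_up R b (Cn R) p - Bmixed R b a p * pd g (Cn R) p"
proof -
  have cll: "cov_ll R d (\<lambda>i j q. Cn R q * Bcurv R i j q) a g p = pd d (Cn R) p * BBx R a g p + Cn R p * Kx R d a g p"
    if d: "d < 2" for d
  proof -
    have "pd d (\<lambda>q. Cn R q * BBx R a g q) p = Cn R p * pd d (BBx R a g) p + pd d (Cn R) p * BBx R a g p"
      using h p d by (intro pdU_mult Cn_s BBx_s) auto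
    then show ?thesis by (simp add: cov_ll_def Kx_def Bcurv_fun sum2 algebra_simps)
  qed
  have pB: "pd g (Bmixed R b a) p = pd g (Mx R b a) p"
    using Bmixed_M h by (intro pd_cong[OF U p]) auto
  have cul: "cov_ul R g (\<lambda>i j q. Cn R q * Bmixed R i j q) b a p = pd g (Cn R) p * Mx R b a p
      + Cn R p * (pd g (Mx R b a) p + (\<Sum>e<2. Chr R b g e p * Mx R e a p) - (\<Sum>e<2. Chr R e g a p * Mx R b e p))"
  proof -
    have "pd g (\<lambda>q. Cn R q * Bmixed R b a q) p = Cn R p * pd g (Bmixed R b a) p + pd g (Cn R) p * Bmixed R b a p"
      using h p by (intro pdU_mult Cn_s Bmixed_s) auto
    then show ?thesis using h p
      by (simp add: cov_ul_def pB Bmixed_M sum2 algebra_simps)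
  qed
  have K0: "Kx R 0 a g p = Kx R g 0 a p" and K1: "Kx R (Suc 0) a g p = Kx R g (Suc 0) a p"
    using K_sym[OF p] h by auto
  have c0: "cov_ll R 0 (\<lambda>i j q. Cn R q * Bcurv R i j q) a g p = pd 0 (Cn R) p * BBx R a g p + Cn R p * Kx R 0 a g p"
    using cll[of 0] by simp
  have c1: "cov_ll R 1 (\<lambda>i j q. Cn R q * Bcurv R i j q) a g p = pd 1 (Cn R) p * BBx R a g p + Cn R p * Kx R 1 a g p"
    using cll[of 1] by simp
  have cul': "cov_ul R g (\<lambda>i j q. Cn R q * Bmixed R i j q) b a p = pd g (Cn R) p * Mx R b a p
      + Cn R p * (\<Sum>d<2. metric_inv R b d p * Kx R g d a p)"
      using cul metcompat[OF p h] by simp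
  show ?thesis
    unfolding cul' sum2 c0 c1 using h p
    by (simp add: sum2 K0 K1 grad_up_def Bcurv_BB Bmixed_M algebra_simps)
qed

end



context surf begin

lemma cov_up_fun: "cov_up R a psi b = (\<lambda>q. pd a (psi b) q + (\<Sum>c<2. Chr R b a c q * psi c q))"
  by (rule ext) (simp add: cov_up_def)

lemma tder_up_fun: "tder_up R psi b = (\<lambda>q. pd 2 (psi b) q - (\<Sum>c<2. Vup R c q * cov_up R c psi b q)
                       + (\<Sum>c<2. Chr_dot R b c q * psi c q))"
  by (rule ext) (simp add: tder_up_def)

lemma dcov:
  assumes p: "p \<in> U" and ps: "\<forall>c<2. smooth_fn U (psi c)" and h: "i < 3" "a < 3" "b < 2"
  shows "pd i (cov_up R a psi b) p = pd i (pd a (psi b)) p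
           + (\<Sum>e<2. Chr R b a e p * pd i (psi e) p + pd i (Chr R b a e) p * psi e p)"
proof -
  have s1: "smooth_fn U (pd a (psi b))" using ps h by (intro smooth_pd) auto
  have s2: "smooth_fn U (\<lambda>q. \<Sum>c<2. Chr R b a c q * psi c q)"
    using ps h by (intro smooth_sum smooth_mult[OF U] Chr_s U) auto
  have "pd i (cov_up R a psi b) p = pd i (pd a (psi b)) p + pd i (\<lambda>q. \<Sum>c<2. Chr R b a c q * psi c q) p"
    unfolding cov_up_fun using p h by (intro pdU_add s1 s2)
  also have "pd i (\<lambda>q. \<Sum>c<2. Chr R b a c q * psi c q) p = (\<Sum>c<2. pd i (\<lambda>q. Chr R b a c q * psi c q) p)"
    using p h ps by (intro pdU_sum smooth_mult[OF U] Chr_s) auto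
  also have "\<dots> = (\<Sum>e<2. Chr R b a e p * pd i (psi e) p + pd i (Chr R b a e) p * psi e p)"
    by (rule sum.cong) (use p h ps in \<open>auto intro!: pdU_mult Chr_s\<close>)
  finally show ?thesis .
qed

lemma dtder:
  assumes p: "p \<in> U" and ps: "\<forall>c<2. smooth_fn U (psi c)" and h: "a < 2" "b < 2"
  shows "pd a (tder_up R psi b) p = pd a (pd 2 (psi b)) p
     - (\<Sum>c<2. Vup R c p * pd a (cov_up R c psi b) p + pd a (Vup R c) p * cov_up R c psi b p)
     + (\<Sum>c<2. Chr_dot R b c p * pd a (psi c) p + pd a (Chr_dot R b c) p * psi c p)"
proof -
  have s1: "smooth_fn U (pd 2 (psi b))" using ps h by (intro smooth_pd) auto
  have s2: "smooth_fn U (\<lambda>q. \<Sum>c<2. Vup R c q * cov_up R c psi b q)"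
    using ps h by (intro smooth_sum[OF U] smooth_mult[OF U] Vup_s cov_up_s) auto
  have s3: "smooth_fn U (\<lambda>q. \<Sum>c<2. Chr_dot R b c q * psi c q)"
    using ps h by (intro smooth_sum[OF U] smooth_mult[OF U] Chr_dot_s) auto
  have "pd a (tder_up R psi b) p = pd a (pd 2 (psi b)) p - pd a (\<lambda>q. \<Sum>c<2. Vup R c q * cov_up R c psi b q) p
        + pd a (\<lambda>q. \<Sum>c<2. Chr_dot R b c q * psi c q) p"
    unfolding tder_up_fun using p h s1 s2 s3
    by (simp add: pdU_add pdU_diff smooth_diff[OF U])
  also have "pd a (\<lambda>q. \<Sum>c<2. Vup R c q * cov_up R c psi b q) p
      = (\<Sum>c<2. pd a (\<lambda>q. Vup R c q * cov_up R c psi b q) p)"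
    using p h ps by (intro pdU_sum smooth_mult[OF U] Vup_s cov_up_s) auto
  also have "\<dots> = (\<Sum>c<2. Vup R c p * pd a (cov_up R c psi b) p + pd a (Vup R c) p * cov_up R c psi b p)"
    by (rule sum.cong) (use p h ps in \<open>auto intro!: pdU_mult Vup_s cov_up_s\<close>)
  also have "pd a (\<lambda>q. \<Sum>c<2. Chr_dot R b c q * psi c q) p
      = (\<Sum>c<2. pd a (\<lambda>q. Chr_dot R b c q * psi c q) p)"
    using p h ps by (intro pdU_sum smooth_mult[OF U] Chr_dot_s) auto
  also have "\<dots> = (\<Sum>c<2. Chr_dot R b c p * pd a (psi c) p + pd a (Chr_dot R b c) p * psi c p)"
    by (rule sum.cong) (use p h ps in \<open>auto intro!: pdU_mult Chr_dot_s\<close>)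
  finally show ?thesis .
qed

end



context surf begin

lemma psi_formula:
  assumes p: "p \<in> U" and ps: "\<forall>c<2. smooth_fn U (psi c)" and h: "a < 2" "b < 2"
  shows "tder_ul R (\<lambda>i j. cov_up R j psi i) b a p
              - cov_up R a (tder_up R psi) b p
              - Cn R p * (\<Sum>g<2. Bmixed R g a p * cov_up R g psi b p)
         = (\<Sum>g<2. Rdot R b a g p * psi g p)"
proof -
  have E1: "pd 2 (cov_up R a psi b) p = pd 2 (pd a (psi b)) p
           + (\<Sum>e<2. Chr R b a e p * pd 2 (psi e) p + pd 2 (Chr R b a e) p * psi e p)"
    using dcov[OF p ps, of 2 a b] h by simp
  have E2: "pd c (cov_up R a psi b) p = pd c (pd a (psi b)) p
           + (\<Sum>e<2. Chr R b a e p * pd c (psi e) p + pd c (Chr R b a e) p * psi e p)" if "c < 2" for c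
    using dcov[OF p ps, of c a b] h that by simp
  have E3: "pd a (tder_up R psi b) p = pd a (pd 2 (psi b)) p
     - (\<Sum>c<2. Vup R c p * pd a (cov_up R c psi b) p + pd a (Vup R c) p * cov_up R c psi b p)
     + (\<Sum>c<2. Chr_dot R b c p * pd a (psi c) p + pd a (Chr_dot R b c) p * psi c p)"
    by (rule dtder[OF p ps h])
  have E4: "pd a (cov_up R c psi b) p = pd a (pd c (psi b)) p
           + (\<Sum>e<2. Chr R b c e p * pd a (psi e) p + pd a (Chr R b c e) p * psi e p)" if "c < 2" for c
    using dcov[OF p ps, of a c b] h that by simp
  have E5: "pd a (Vup R c) p = Chr_dot R c a p - (\<Sum>e<2. Chr R c a e p * Vup R e p) + Cn R p * Bmixed R c a p"
    if "c < 2" for c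
    by (simp add: Chr_dot_def cov_up_def)
  have cl2: "pd a (pd 2 (psi b)) p = pd 2 (pd a (psi b)) p"
    using ps h by (intro pd_comm[OF U _ p]) auto
  have cl: "pd a (pd c (psi b)) p = pd c (pd a (psi b)) p" if "c < 2" for c
    using ps h that by (intro pd_comm[OF U _ p]) auto
  have sA: "Chr R x c a p = Chr R x a c p" if "c < 2" for x c
    using Chr_sym[OF p] h that by simp
  have s10: "Chr R x (Suc 0) 0 p = Chr R x 0 (Suc 0) p" for x
    using Chr_sym[OF p] by simp
  show ?thesis
    using h
    apply (simp only: tder_ul_def cov_ul_def Rdot_def Riem_def sum2)
    apply (simp add: E1 E2 E3 E4 E5 cl2 cl sA s10 cov_up_def tder_up_def sum2 algebra_simps)
    done
qed

end


theorem mainTheorem6: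
  fixes R :: "pt \<Rightarrow> real^3" and U :: "pt set"
  assumes "open U"
    and "smooth_fn U R"
    and "\<forall>p\<in>U. cross3 (Sv R 0 p) (Sv R 1 p) \<noteq> 0"
  shows "(\<forall>p\<in>U. \<forall>a<2. \<forall>b<2. \<forall>g<2.
            Rdot R b a g p
              = (\<Sum>d<2. metric_inv R b d p * cov_ll R d (\<lambda>i j q. Cn R q * Bcurv R i j q) a g p)
                - cov_ul R g (\<lambda>i j q. Cn R q * Bmixed R i j q) b a p
          \<and> Rdot R b a g p
              = Bcurv R a g p * grad_up R b (Cn R) p - Bmixed R b a p * pd g (Cn R) p)
       \<and> (\<forall>psi :: nat \<Rightarrow> pt \<Rightarrow> real. (\<forall>b<2. smooth_fn U (psi b)) \<longrightarrow>
           (\<forall>p\<in>U. \<forall>a<2. \<forall>b<2.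
              tder_ul R (\<lambda>i j. cov_up R j psi i) b a p
              - cov_up R a (tder_up R psi) b p
              - Cn R p * (\<Sum>g<2. Bmixed R g a p * cov_up R g psi b p)
              = (\<Sum>g<2. (Bcurv R a g p * grad_up R b (Cn R) p
                         - Bmixed R b a p * pd g (Cn R) p) * psi g p)))"
  proof -
  interpret surf R U by unfold_locales (use assms in auto)
  have P1: "\<forall>p\<in>U. \<forall>a<2. \<forall>b<2. \<forall>g<2.
            Rdot R b a g p
              = (\<Sum>d<2. metric_inv R b d p * cov_ll R d (\<lambda>i j q. Cn R q * Bcurv R i j q) a g p)
                - cov_ul R g (\<lambda>i j q. Cn R q * Bmixed R i j q) b a p
          \<and> Rdot R b a g p
              = Bcurv R a g p * grad_up R b (Cn R) p - Bmixed R b a p * pd g (Cn R) p"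
    using Rdot_formula cov_formula by simp
  have P2: "\<forall>psi :: nat \<Rightarrow> pt \<Rightarrow> real. (\<forall>b<2. smooth_fn U (psi b)) \<longrightarrow>
           (\<forall>p\<in>U. \<forall>a<2. \<forall>b<2.
              tder_ul R (\<lambda>i j. cov_up R j psi i) b a p
              - cov_up R a (tder_up R psi) b p
              - Cn R p * (\<Sum>g<2. Bmixed R g a p * cov_up R g psi b p)
              = (\<Sum>g<2. (Bcurv R a g p * grad_up R b (Cn R) p
                         - Bmixed R b a p * pd g (Cn R) p) * psi g p))"
  proof (intro allI impI ballI)
    fix psi :: "nat \<Rightarrow> pt \<Rightarrow> real" and p :: pt and a b :: nat
    assume ps: "\<forall>b<2. smooth_fn U (psi b)" and p: "p \<in> U" and a: "a < 2" and b: "b < 2"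
    have "tder_ul R (\<lambda>i j. cov_up R j psi i) b a p
              - cov_up R a (tder_up R psi) b p
              - Cn R p * (\<Sum>g<2. Bmixed R g a p * cov_up R g psi b p)
         = (\<Sum>g<2. Rdot R b a g p * psi g p)"
      using psi_formula[OF p ps a b] .
    also have "\<dots> = (\<Sum>g<2. (Bcurv R a g p * grad_up R b (Cn R) p
                         - Bmixed R b a p * pd g (Cn R) p) * psi g p)"
      by (rule sum.cong) (use Rdot_formula[OF p a b] in auto)
    finally show "tder_ul R (\<lambda>i j. cov_up R j psi i) b a p
              - cov_up R a (tder_up R psi) b p
              - Cn R p * (\<Sum>g<2. Bmixed R g a p * cov_up R g psi b p)
              = (\<Sum>g<2. (Bcurv R a g p * grad_up R b (Cn R) p
                         - Bmixed R b a p * pd g (Cn R) p) * psi g p)" .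
  qed
  show ?thesis using P1 P2 by blast
qed

end
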